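(* Assume $\mathrm{rank}\,N=3$. Let $g$ be a $\mathbf{\Sigma}$-piecewise linear function such that $\mathcal L=\sum_{i=1}^n g(v_i)E_i$ is a nonzero element of $\mathrm{Pic}_{\mathbb{R}}(\mathbb{P}_{\mathbf{\Sigma}})$ that is not contained in the interior of $Z_I$ for any $I\in\Delta$. Suppose there is $s\in\{1,\dots,n\}$ with $g(v_s)=0$ and $g(v_i)\ne0$ for all $i\ne s$. Then the number of sign changes of $g$ around $B_s$ is exactly two.
   Context: $N$ is a lattice of rank $m$, $M=\mathrm{Hom}(N,\mathbb{Z})$, $N_{\mathbb{R}}=N\otimes\mathbb{R}$, $M_{\mathbb{R}}=M\otimes\mathbb{R}$; $\Sigma$ is a complete simplicial fan in $N_{\mathbb{R}}$ with $n$ rays and $v_i\in N$ a nonzero lattice point on the $i$-th ray ($\mathbf{\Sigma}=(\Sigma,\{v_i\})$), with associated toric DM stack $\mathbb{P}_{\mathbf{\Sigma}}$. $\mathrm{Pic}_{\mathbb{R}}(\mathbb{P}_{\mathbf{\Sigma}})$ is identified with $\mathbb{R}^n/\{\sum_i w(v_i)E_i:w\in M_{\mathbb{R}}\}$, where $E_1,\dots,E_n$ is the standard basis of $\mathbb{R}^n$. A $\mathbf{\Sigma}$-piecewise linear function is a continuous function $N_{\mathbb{R}}\to\mathbb{R}$ whose restriction to each cone of $\Sigma$ is linear. For $I\subseteq\{1,\dots,n\}$, $C_I$ is the simplicial complex on $\{1,\dots,n\}$ whose faces are the subsets $J\subseteq I$ (including $\emptyset$) with $\{v_i:i\in J\}$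 contained in a single cone of $\Sigma$. $\Delta$ is the set of $I\subseteq\{1,\dots,n\}$ such that $C_I$ has nonzero reduced homology in some degree (reduced homology with $\mathbb{C}$-coefficients, the complex $\{\emptyset\}$ having $\tilde H_{-1}=\mathbb{C}$; so $\emptyset,\{1,\dots,n\}\in\Delta$). For $I\subseteq\{1,\dots,n\}$, $Z_I=\sum_{i\in I}\mathbb{R}_{\ge0}E_i-\sum_{i\notin I}\mathbb{R}_{\ge0}E_i\subseteq\mathrm{Pic}_{\mathbb{R}}(\mathbb{P}_{\mathbf{\Sigma}})$. For rank $3$: $B_s$ is the set of $v_j$ such that $v_j$ and $v_s$ span a two-dimensional cone of $\Sigma$; these are cyclically ordered around $v_s$ (say clockwise) as $v_{j_1},\dots,v_{j_l}$. Treating "$\ge0$" and "$<0$" as the two signs, the number of sign changes of $g$ around $B_s$ is the number of cyclically consecutive pairs $\{v_{j_k},v_{j_{k+1}}\}$ (indices mod $l$) such that $g(v_{j_k})$ and $g(v_{j_{k+1}})$ have different signs. *)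

theory Defs
  imports "HOL-Analysis.Analysis"
begin

text \<open>Rays are indexed by a finite linearly ordered type 'n (so n = CARD('n));
  N = Z^3 sits inside N_R = real^3; M_R is represented by real^3 via the dot product.\<close>

definition cone_of :: "('n \<Rightarrow> real^3) \<Rightarrow> 'n set \<Rightarrow> (real^3) set" where
  "cone_of v S = {x. \<exists>c. (\<forall>i\<in>S. 0 \<le> c i) \<and> x = (\<Sum>i\<in>S. c i *\<^sub>R v i)}"

definition complete_simplicial_fan :: "('n \<Rightarrow> real^3) \<Rightarrow> 'n set set \<Rightarrow> bool" where
  "complete_simplicial_fan v F \<longleftrightarrow>
     {} \<in> F \<and> (\<forall>S\<in>F. \<forall>T. T \<subseteq> S \<longrightarrow> T \<in> F) \<and> (\<forall>i. {i} \<in> F) \<and>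
     (\<forall>S\<in>F. inj_on v S \<and> independent (v ` S)) \<and>
     (\<forall>S\<in>F. \<forall>T\<in>F. cone_of v S \<inter> cone_of v T = cone_of v (S \<inter> T)) \<and>
     (\<Union>S\<in>F. cone_of v S) = UNIV"

definition sigma_pl :: "('n \<Rightarrow> real^3) \<Rightarrow> 'n set set \<Rightarrow> (real^3 \<Rightarrow> real) \<Rightarrow> bool" where
  "sigma_pl v F g \<longleftrightarrow> continuous_on UNIV g \<and>
     (\<forall>S\<in>F. \<exists>w. \<forall>x\<in>cone_of v S. g x = w \<bullet> x)"

text \<open>Pic_R = R^n / W, with W the image of M_R. We work with representatives in R^n.\<close>
definition M_image :: "('n::finite \<Rightarrow> real^3) \<Rightarrow> (real^'n) set" where
  "M_image v = {(\<chi> i. w \<bullet> v i) | w. True}"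

definition pic_vec :: "('n::finite \<Rightarrow> real^3) \<Rightarrow> (real^3 \<Rightarrow> real) \<Rightarrow> real^'n" where
  "pic_vec v g = (\<chi> i. g (v i))"

definition Zset :: "'n::finite set \<Rightarrow> (real^'n) set" where
  "Zset I = {x. \<forall>i. (i \<in> I \<longrightarrow> 0 \<le> x $ i) \<and> (i \<notin> I \<longrightarrow> x $ i \<le> 0)}"

text \<open>Preimage in R^n of the image of Z_I in Pic_R: Z_I + W.\<close>
definition Zpic :: "('n::finite \<Rightarrow> real^3) \<Rightarrow> 'n set \<Rightarrow> (real^'n) set" where
  "Zpic v I = {z + w | z w. z \<in> Zset I \<and> w \<in> M_image v}"

text \<open>Simplicial complex C_I (faces include the empty set).\<close>
definition cplx :: "('n \<Rightarrow> real^3) \<Rightarrow> 'n set set \<Rightarrow> 'n set \<Rightarrow> 'n set set" where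
  "cplx v F I = {J. J \<subseteq> I \<and> (\<exists>S\<in>F. v ` J \<subseteq> cone_of v S)}"

text \<open>Augmented simplicial chain complex with complex coefficients. A chain of
  "size" d (= degree d-1) is a function on faces of cardinality d.\<close>
definition is_chain :: "'n set set \<Rightarrow> nat \<Rightarrow> ('n set \<Rightarrow> complex) \<Rightarrow> bool" where
  "is_chain K d c \<longleftrightarrow> (\<forall>\<sigma>. c \<sigma> \<noteq> 0 \<longrightarrow> \<sigma> \<in> K \<and> card \<sigma> = d)"

definition bdry :: "nat \<Rightarrow> ('n::{finite,linorder} set \<Rightarrow> complex) \<Rightarrow> ('n set \<Rightarrow> complex)" where
  "bdry d c = (\<lambda>\<tau>. if card \<tau> + 1 = d
       then (\<Sum>x\<in>UNIV - \<tau>. (-1) ^ card {u\<in>\<tau>. u < x} * c (insert x \<tau>)) else 0)"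

text \<open>Reduced homology in degree d-1 is nonzero: some cycle is not a boundary.\<close>
definition red_hom_nonzero :: "'n::{finite,linorder} set set \<Rightarrow> nat \<Rightarrow> bool" where
  "red_hom_nonzero K d \<longleftrightarrow>
     (\<exists>c. is_chain K d c \<and> bdry d c = (\<lambda>_. 0) \<and>
          \<not> (\<exists>b. is_chain K (Suc d) b \<and> bdry (Suc d) b = c))"

definition Delta :: "('n::{finite,linorder} \<Rightarrow> real^3) \<Rightarrow> 'n set set \<Rightarrow> 'n set set" where
  "Delta v F = {I. \<exists>d. red_hom_nonzero (cplx v F I) d}"

definition nbrs :: "'n set set \<Rightarrow> 'n \<Rightarrow> 'n set" where
  "nbrs F s = {j. j \<noteq> s \<and> {s, j} \<in> F}"

text \<open>js lists B_s in cyclic (angular) order around v_s: angles of the projections to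
  the plane orthogonal to v_s, w.r.t. an orthonormal frame of that plane, strictly decrease.\<close>
definition cyclic_order_around :: "('n \<Rightarrow> real^3) \<Rightarrow> 'n set set \<Rightarrow> 'n \<Rightarrow> 'n list \<Rightarrow> bool" where
  "cyclic_order_around v F s js \<longleftrightarrow> distinct js \<and> set js = nbrs F s \<and>
     (\<exists>e1 e2. e1 \<bullet> e1 = 1 \<and> e2 \<bullet> e2 = 1 \<and> e1 \<bullet> e2 = 0 \<and> e1 \<bullet> v s = 0 \<and> e2 \<bullet> v s = 0 \<and>
        sorted_wrt (>) (map (\<lambda>j. Arg (Complex (v j \<bullet> e1) (v j \<bullet> e2))) js))"

definition sign_changes :: "(real^3 \<Rightarrow> real) \<Rightarrow> ('n \<Rightarrow> real^3) \<Rightarrow> 'n list \<Rightarrow> nat" where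
  "sign_changes g v js = card {k. k < length js \<and>
      (0 \<le> g (v (js ! k))) \<noteq> (0 \<le> g (v (js ! ((k + 1) mod length js))))}"

end

theory Submission
  imports Defs
begin

definition cob :: "('n::{finite,linorder} set \<Rightarrow> complex) \<Rightarrow> 'n set \<Rightarrow> complex" where
  "cob w \<tau> = (\<Sum>x\<in>\<tau>. (-1) ^ card {u\<in>\<tau> - {x}. u < x} * w (\<tau> - {x}))"

lemma aux_set: "x \<notin> \<sigma> \<Longrightarrow> {u. (u = x \<or> u \<in> \<sigma>) \<and> u \<noteq> x \<and> u < x} = {u\<in>\<sigma>. u < x}"
  by auto

lemma pairing:
  fixes b :: "'n::{finite,linorder} set \<Rightarrow> complex"
  assumes "is_chain K d b"
  shows "(\<Sum>\<sigma>\<in>UNIV. w \<sigma> * bdry d b \<sigma>) = (\<Sum>\<tau>\<in>UNIV. b \<tau> * cob w \<tau>)"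
proof -
  have L: "(\<Sum>\<sigma>\<in>UNIV. w \<sigma> * bdry d b \<sigma>) =
      (\<Sum>\<sigma>\<in>UNIV. \<Sum>x\<in>UNIV - \<sigma>. w \<sigma> * (-1) ^ card {u\<in>\<sigma>. u < x} * b (insert x \<sigma>))"
  proof (rule sum.cong[OF refl])
    fix \<sigma> :: "'n set"
    show "w \<sigma> * bdry d b \<sigma> = (\<Sum>x\<in>UNIV - \<sigma>. w \<sigma> * (-1) ^ card {u\<in>\<sigma>. u < x} * b (insert x \<sigma>))"
    proof (cases "card \<sigma> + 1 = d")
      case True then show ?thesis by (simp add: bdry_def sum_distrib_left mult.assoc)
    next
      case False
      have "b (insert x \<sigma>) = 0" if "x \<notin> \<sigma>" for x
      proof (rule ccontr)
        assume "b (insert x \<sigma>) \<noteq> 0"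
        then have "card (insert x \<sigma>) = d" using assms unfolding is_chain_def by blast
        then show False using False that by simp
      qed
      then show ?thesis using False by (simp add: bdry_def)
    qed
  qed
  have R: "(\<Sum>\<tau>\<in>UNIV. b \<tau> * cob w \<tau>) =
      (\<Sum>\<tau>\<in>UNIV. \<Sum>x\<in>\<tau>. b \<tau> * ((-1) ^ card {u\<in>\<tau> - {x}. u < x} * w (\<tau> - {x})))"
    by (simp add: cob_def sum_distrib_left)
  have "(\<Sum>\<sigma>\<in>UNIV. \<Sum>x\<in>UNIV - \<sigma>. w \<sigma> * (-1) ^ card {u\<in>\<sigma>. u < x} * b (insert x \<sigma>))
      = (\<Sum>(\<sigma>,x)\<in>Sigma UNIV (\<lambda>\<sigma>. UNIV - \<sigma>). w \<sigma> * (-1) ^ card {u\<in>\<sigma>. u < x} * b (insert x \<sigma>))"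
    by (rule sum.Sigma) auto
  also have "\<dots> = (\<Sum>(\<tau>,x)\<in>Sigma UNIV (\<lambda>\<tau>. \<tau>). b \<tau> * ((-1) ^ card {u\<in>\<tau> - {x}. u < x} * w (\<tau> - {x})))"
    by (rule sum.reindex_bij_witness[where i = "\<lambda>(\<tau>,x). (\<tau> - {x}, x)" and j = "\<lambda>(\<sigma>,x). (insert x \<sigma>, x)"])
       (auto simp: insert_absorb Diff_insert_absorb mult_ac aux_set)
  also have "\<dots> = (\<Sum>\<tau>\<in>UNIV. \<Sum>x\<in>\<tau>. b \<tau> * ((-1) ^ card {u\<in>\<tau> - {x}. u < x} * w (\<tau> - {x})))"
    by (rule sum.Sigma[symmetric]) auto
  finally show ?thesis using L R by simp
qed

lemma no_boundary:
  fixes c :: "'n::{finite,linorder} set \<Rightarrow> complex"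
  assumes "\<And>\<tau>. \<tau> \<in> K \<Longrightarrow> card \<tau> = d \<Longrightarrow> cob w \<tau> = 0"
    and "(\<Sum>\<sigma>\<in>UNIV. w \<sigma> * c \<sigma>) \<noteq> 0"
  shows "\<not> (\<exists>b. is_chain K d b \<and> bdry d b = c)"
proof
  assume "\<exists>b. is_chain K d b \<and> bdry d b = c"
  then obtain b where b: "is_chain K d b" "bdry d b = c" by blast
  have "(\<Sum>\<sigma>\<in>UNIV. w \<sigma> * c \<sigma>) = (\<Sum>\<tau>\<in>UNIV. b \<tau> * cob w \<tau>)"
    using pairing[OF b(1), of w] b(2) by simp
  also have "\<dots> = 0"
  proof (rule sum.neutral, intro ballI)
    fix \<tau> :: "'n set"
    show "b \<tau> * cob w \<tau> = 0"
    proof (cases "b \<tau> = 0")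
      case False
      then have "\<tau> \<in> K" "card \<tau> = d" using b(1) unfolding is_chain_def by auto
      then show ?thesis using assms(1) by simp
    qed simp
  qed
  finally show False using assms(2) by simp
qed

lemma red_hom_nonzeroI:
  fixes c :: "'n::{finite,linorder} set \<Rightarrow> complex"
  assumes "is_chain K d c" "bdry d c = (\<lambda>_. 0)"
    and "\<And>\<tau>. \<tau> \<in> K \<Longrightarrow> card \<tau> = Suc d \<Longrightarrow> cob w \<tau> = 0"
    and "(\<Sum>\<sigma>\<in>UNIV. w \<sigma> * c \<sigma>) \<noteq> 0"
  shows "red_hom_nonzero K d"
  unfolding red_hom_nonzero_def using assms no_boundary[of K "Suc d" w c] by blast

definition conez :: "'n::{finite,linorder} \<Rightarrow> ('n set \<Rightarrow> complex) \<Rightarrow> 'n set \<Rightarrow> complex" where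
  "conez s z \<tau> = (if s \<in> \<tau> then (-1) ^ card {u\<in>\<tau>. u < s} * z (\<tau> - {s}) else 0)"

lemma bdry_conez:
  fixes z :: "'n::{finite,linorder} set \<Rightarrow> complex"
  assumes "\<And>\<sigma>. z \<sigma> \<noteq> 0 \<Longrightarrow> s \<notin> \<sigma> \<and> card \<sigma> = d"
  shows "bdry (Suc d) (conez s z) = (\<lambda>\<tau>. z \<tau> - conez s (bdry d z) \<tau>)"
proof
  fix \<sigma> :: "'n set"
  show "bdry (Suc d) (conez s z) \<sigma> = z \<sigma> - conez s (bdry d z) \<sigma>"
  proof (cases "s \<in> \<sigma>")
    case False
    show ?thesis
    proof (cases "card \<sigma> = d")
      case True
      have "(\<Sum>x\<in>UNIV - \<sigma>. (-1) ^ card {u\<in>\<sigma>. u < x} * conez s z (insert x \<sigma>))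
          = (\<Sum>x\<in>UNIV - \<sigma>. if x = s then z \<sigma> else 0)"
      proof (rule sum.cong[OF refl])
        fix x assume x: "x \<in> UNIV - \<sigma>"
        show "(-1) ^ card {u\<in>\<sigma>. u < x} * conez s z (insert x \<sigma>) = (if x = s then z \<sigma> else 0)"
        proof (cases "x = s")
          case True
          have e: "{u \<in> insert s \<sigma>. u < s} = {u\<in>\<sigma>. u < s}" by auto
          have "insert s \<sigma> - {s} = \<sigma>" using False by auto
          then show ?thesis using True e
            by (simp add: conez_def flip: power_add mult.assoc)
        qed (use False in \<open>auto simp: conez_def\<close>)
      qed
      also have "\<dots> = z \<sigma>" using False by (simp add: sum.delta)
      finally show ?thesis using True False by (simp add: bdry_def conez_def)
    next
      case False2: False
      have "z \<sigma> = 0" using assms False2 by blast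
      then show ?thesis using False False2 by (simp add: bdry_def conez_def)
    qed
  next
    case True
    have z0: "z \<sigma> = 0" using assms True by blast
    have fin: "finite \<sigma>" by simp
    show ?thesis
    proof (cases "card \<sigma> = d")
      case False
      have "card \<sigma> > 0" using True by (auto simp: card_gt_0_iff)
      then have "card (\<sigma> - {s}) + 1 = card \<sigma>" using True by (simp add: card_Diff_singleton)
      then show ?thesis using False True z0 by (auto simp: bdry_def conez_def)
    next
      case cd: True
      have "card \<sigma> > 0" using True by (auto simp: card_gt_0_iff)
      then have cs: "card (\<sigma> - {s}) + 1 = d" using True cd by (simp add: card_Diff_singleton)
      have "bdry d z (\<sigma> - {s}) = (\<Sum>x\<in>UNIV - (\<sigma> - {s}). (-1) ^ card {u\<in>\<sigma> - {s}. u < x} * z (insert x (\<sigma> - {s})))"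
        using cs by (simp add: bdry_def)
      also have "\<dots> = (\<Sum>x\<in>UNIV - \<sigma>. (-1) ^ card {u\<in>\<sigma> - {s}. u < x} * z (insert x (\<sigma> - {s})))"
      proof -
        have "UNIV - (\<sigma> - {s}) = insert s (UNIV - \<sigma>)" using True by auto
        moreover have "z (insert s (\<sigma> - {s})) = 0" using z0 True by (simp add: insert_absorb)
        moreover have "s \<notin> UNIV - \<sigma>" using True by simp
        ultimately show ?thesis by (simp only: sum.insert[OF finite]) simp
      qed
      finally have B: "bdry d z (\<sigma> - {s}) = (\<Sum>x\<in>UNIV - \<sigma>. (-1) ^ card {u\<in>\<sigma> - {s}. u < x} * z (insert x (\<sigma> - {s})))" .
      have "bdry (Suc d) (conez s z) \<sigma> = (\<Sum>x\<in>UNIV - \<sigma>. (-1) ^ card {u\<in>\<sigma>. u < x} * conez s z (insert x \<sigma>))"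
        using cd by (simp add: bdry_def)
      also have "\<dots> = (\<Sum>x\<in>UNIV - \<sigma>. - ((-1) ^ card {u\<in>\<sigma>. u < s} * ((-1) ^ card {u\<in>\<sigma> - {s}. u < x} * z (insert x (\<sigma> - {s})))))"
      proof (rule sum.cong[OF refl])
        fix x assume x: "x \<in> UNIV - \<sigma>"
        then have xs: "x \<noteq> s" using True by auto
        have i: "insert x \<sigma> - {s} = insert x (\<sigma> - {s})" using xs by auto
        have c1: "card {u \<in> insert x \<sigma>. u < s} = card {u\<in>\<sigma>. u < s} + (if x < s then 1 else 0)"
        proof (cases "x < s")
          case True
          have "{u \<in> insert x \<sigma>. u < s} = insert x {u\<in>\<sigma>. u < s}" using True by auto
          then show ?thesis using True x by simp
        next
          case False
          have "{u \<in> insert x \<sigma>. u < s} = {u\<in>\<sigma>. u < s}" using False by auto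
          then show ?thesis using False by simp
        qed
        have c2: "card {u\<in>\<sigma>. u < x} = card {u\<in>\<sigma> - {s}. u < x} + (if s < x then 1 else 0)"
        proof (cases "s < x")
          case True
          have "{u \<in> \<sigma>. u < x} = insert s {u\<in>\<sigma> - {s}. u < x}" using True \<open>s \<in> \<sigma>\<close> by auto
          then show ?thesis using True by simp
        next
          case False
          have "{u \<in> \<sigma>. u < x} = {u\<in>\<sigma> - {s}. u < x}" using False xs by auto
          then show ?thesis using False by simp
        qed
        have "x < s \<or> s < x" using xs by auto
        then show "(-1) ^ card {u\<in>\<sigma>. u < x} * conez s z (insert x \<sigma>) =
           - ((-1) ^ card {u\<in>\<sigma>. u < s} * ((-1) ^ card {u\<in>\<sigma> - {s}. u < x} * z (insert x (\<sigma> - {s}))))"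
          using c1 c2 i True by (auto simp: conez_def power_add)
      qed
      also have "\<dots> = - ((-1) ^ card {u\<in>\<sigma>. u < s} * bdry d z (\<sigma> - {s}))"
        by (simp add: B sum_negf sum_distrib_left)
      finally show ?thesis using True z0 by (simp add: conez_def)
    qed
  qed
qed

lemma bdry_diff:
  "bdry d (\<lambda>\<sigma>. a \<sigma> - b \<sigma>) = (\<lambda>\<tau>. bdry d a \<tau> - bdry d b \<tau>)"
  by (auto simp: bdry_def algebra_simps sum_subtractf)

lemma bdry_sum:
  "bdry d (\<lambda>\<sigma>. \<Sum>k\<in>A. f k \<sigma>) = (\<lambda>\<tau>. \<Sum>k\<in>A. bdry d (f k) \<tau>)"
  unfolding bdry_def by (rule ext) (simp add: sum_distrib_left sum.swap[of _ A])

lemma bdry_zero: "bdry d (\<lambda>_. 0) = (\<lambda>_. 0)"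
  by (auto simp: bdry_def)

lemma conez_zero: "conez s (\<lambda>_. 0) = (\<lambda>_. 0)"
  by (auto simp: conez_def)



lemma cone_of_empty: "cone_of v {} = {0}" by (auto simp: cone_of_def)

lemma mem_cone_self:
  fixes v :: "'n::finite \<Rightarrow> real^3"
  shows "i \<in> S \<Longrightarrow> v i \<in> cone_of v S"
proof -
  assume i: "i \<in> S"
  have "(\<Sum>j\<in>S. (if j = i then 1 else 0) *\<^sub>R v j) = (\<Sum>j\<in>S. if j = i then v j else 0)"
    by (rule sum.cong) auto
  also have "\<dots> = v i" using i by (simp add: sum.delta)
  finally show ?thesis unfolding cone_of_def
    by (intro CollectI exI[of _ "\<lambda>j. if j = i then 1 else 0"]) auto
qed

lemma csf_parts:
  assumes "complete_simplicial_fan v F"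
  shows "{} \<in> F" "\<And>S T. S \<in> F \<Longrightarrow> T \<subseteq> S \<Longrightarrow> T \<in> F" "\<And>i. {i} \<in> F"
    "\<And>S. S \<in> F \<Longrightarrow> inj_on v S" "\<And>S. S \<in> F \<Longrightarrow> independent (v ` S)"
    "\<And>S T. S \<in> F \<Longrightarrow> T \<in> F \<Longrightarrow> cone_of v S \<inter> cone_of v T = cone_of v (S \<inter> T)"
    "(\<Union>S\<in>F. cone_of v S) = UNIV"
  using assms unfolding complete_simplicial_fan_def by blast+

lemma fan_v_nonzero:
  assumes "complete_simplicial_fan v F"
  shows "v i \<noteq> 0"
proof
  assume "v i = 0"
  then have "0 \<in> v ` {i}" by simp
  then have "dependent (v ` {i})" using dependent_zero by blast
  then show False using csf_parts(5)[OF assms csf_parts(3)[OF assms]] by blast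
qed

lemma fan_ray:
  fixes v :: "'n::finite \<Rightarrow> real^3"
  assumes "complete_simplicial_fan v F" "S \<in> F" "v i \<in> cone_of v S"
  shows "i \<in> S"
proof (rule ccontr)
  assume "i \<notin> S"
  then have "{i} \<inter> S = {}" by auto
  then have "cone_of v {i} \<inter> cone_of v S = {0}"
    using csf_parts(6)[OF assms(1) csf_parts(3)[OF assms(1)] assms(2)] cone_of_empty by metis
  moreover have "v i \<in> cone_of v {i}" by (rule mem_cone_self) simp
  ultimately show False using assms(3) fan_v_nonzero[OF assms(1)] by blast
qed

lemma fan_inj:
  fixes v :: "'n::finite \<Rightarrow> real^3"
  assumes "complete_simplicial_fan v F"
  shows "inj v"
proof (rule injI)
  fix i j assume "v i = v j"
  then have "v i \<in> cone_of v {j}" using mem_cone_self[of j "{j}" v] by simp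
  then show "i = j" using fan_ray[OF assms csf_parts(3)[OF assms]] by blast
qed

lemma cplx_eq:
  fixes v :: "'n::finite \<Rightarrow> real^3"
  assumes "complete_simplicial_fan v F"
  shows "cplx v F I = {J. J \<subseteq> I \<and> J \<in> F}"
proof (intro set_eqI iffI)
  fix J assume "J \<in> cplx v F I"
  then obtain S where S: "J \<subseteq> I" "S \<in> F" "v ` J \<subseteq> cone_of v S" unfolding cplx_def by blast
  have "J \<subseteq> S" using S fan_ray[OF assms S(2)] by blast
  then show "J \<in> {J. J \<subseteq> I \<and> J \<in> F}" using S csf_parts(2)[OF assms] by blast
next
  fix J assume "J \<in> {J. J \<subseteq> I \<and> J \<in> F}"
  then show "J \<in> cplx v F I" unfolding cplx_def using mem_cone_self[of _ J v] by blast
qed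

lemma face_card:
  fixes v :: "'n::finite \<Rightarrow> real^3"
  assumes "complete_simplicial_fan v F" "S \<in> F"
  shows "card S \<le> 3"
proof -
  have "card S = card (v ` S)" using csf_parts(4)[OF assms] by (simp add: card_image)
  also have "\<dots> \<le> DIM(real^3)" using independent_bound csf_parts(5)[OF assms] by blast
  finally show ?thesis by simp
qed

lemma interior_Zpic:
  fixes v :: "'n::finite \<Rightarrow> real^3" and L :: "real^'n"
  assumes "\<And>i. (i \<in> I \<longrightarrow> L$i - w \<bullet> v i > 0) \<and> (i \<notin> I \<longrightarrow> L$i - w \<bullet> v i < 0)"
  shows "L \<in> interior (Zpic v I)"
proof -
  define x where "x = L - (\<chi> i. w \<bullet> v i)"
  have xn: "x$i \<noteq> 0" for i using assms[of i] by (auto simp: x_def)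
  define \<delta> where "\<delta> = Min (range (\<lambda>i. \<bar>x$i\<bar>))"
  have dpos: "\<delta> > 0" unfolding \<delta>_def using xn by (subst Min_gr_iff) auto
  have dle: "\<delta> \<le> \<bar>x$i\<bar>" for i unfolding \<delta>_def by (rule Min_le) auto
  have "ball L \<delta> \<subseteq> Zpic v I"
  proof
    fix y assume "y \<in> ball L \<delta>"
    then have yd: "norm (y - L) < \<delta>" by (simp add: dist_norm norm_minus_commute)
    have comp: "\<bar>(y - L)$i\<bar> < \<delta>" for i using component_le_norm_cart[of "y - L" i] yd by linarith
    define z where "z = y - (\<chi> i. w \<bullet> v i)"
    have "z \<in> Zset I"
      unfolding Zset_def
    proof (intro CollectI allI conjI impI)
      fix i
      have e: "z$i = x$i + (y - L)$i" by (simp add: z_def x_def)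
      { assume "i \<in> I" then have "x$i > 0" using assms[of i] by (simp add: x_def)
        then show "0 \<le> z$i" using e comp[of i] dle[of i] by linarith }
      { assume "i \<notin> I" then have "x$i < 0" using assms[of i] by (simp add: x_def)
        then show "z$i \<le> 0" using e comp[of i] dle[of i] by linarith }
    qed
    moreover have "(\<chi> i. w \<bullet> v i) \<in> M_image v" unfolding M_image_def by blast
    ultimately show "y \<in> Zpic v I" unfolding Zpic_def z_def by force
  qed
  then show ?thesis using dpos by (meson interior_maximal open_ball centre_in_ball subsetD)
qed

lemma interior_two:
  fixes v :: "'n::finite \<Rightarrow> real^3" and g :: "real^3 \<Rightarrow> real"
  assumes "v s \<noteq> 0" "g (v s) = 0" "\<forall>i. i \<noteq> s \<longrightarrow> g (v i) \<noteq> 0"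
  shows "pic_vec v g \<in> interior (Zpic v {i. g (v i) > 0})"
    "pic_vec v g \<in> interior (Zpic v (insert s {i. g (v i) > 0}))"
proof -
  define \<epsilon> where "\<epsilon> = Min (insert 1 ((\<lambda>i. \<bar>g (v i)\<bar> / (\<bar>v s \<bullet> v i\<bar> + 1)) ` (UNIV - {s})))"
  have epos: "\<epsilon> > 0" unfolding \<epsilon>_def using assms(3) by (subst Min_gr_iff) auto
  have ele: "\<epsilon> \<le> \<bar>g (v i)\<bar> / (\<bar>v s \<bullet> v i\<bar> + 1)" if "i \<noteq> s" for i
    unfolding \<epsilon>_def by (rule Min_le) (use that in auto)
  have small: "\<epsilon> * \<bar>v s \<bullet> v i\<bar> < \<bar>g (v i)\<bar>" if "i \<noteq> s" for i
  proof -
    have gp: "\<bar>g (v i)\<bar> > 0" using assms(3) that by auto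
    have "\<epsilon> * \<bar>v s \<bullet> v i\<bar> \<le> \<bar>g (v i)\<bar> / (\<bar>v s \<bullet> v i\<bar> + 1) * \<bar>v s \<bullet> v i\<bar>"
      by (rule mult_right_mono) (use ele[OF that] in auto)
    also have "\<dots> < \<bar>g (v i)\<bar>"
      using gp by (simp add: field_simps)
    finally show ?thesis .
  qed
  have vv: "v s \<bullet> v s > 0" using assms(1) by simp
  have L: "pic_vec v g $ i = g (v i)" for i by (simp add: pic_vec_def)
  show "pic_vec v g \<in> interior (Zpic v {i. g (v i) > 0})"
  proof (rule interior_Zpic[where w = "\<epsilon> *\<^sub>R v s"])
    fix i
    show "(i \<in> {i. g (v i) > 0} \<longrightarrow> pic_vec v g $ i - (\<epsilon> *\<^sub>R v s) \<bullet> v i > 0) \<and>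
          (i \<notin> {i. g (v i) > 0} \<longrightarrow> pic_vec v g $ i - (\<epsilon> *\<^sub>R v s) \<bullet> v i < 0)"
    proof (cases "i = s")
      case True then show ?thesis using assms(2) epos vv by (simp add: L)
    next
      case False
      have "\<bar>\<epsilon> * (v s \<bullet> v i)\<bar> < \<bar>g (v i)\<bar>" using small[OF False] epos by (simp add: abs_mult)
      then show ?thesis using assms(3) False by (auto simp: L abs_less_iff)
    qed
  qed
  show "pic_vec v g \<in> interior (Zpic v (insert s {i. g (v i) > 0}))"
  proof (rule interior_Zpic[where w = "(- \<epsilon>) *\<^sub>R v s"])
    fix i
    show "(i \<in> insert s {i. g (v i) > 0} \<longrightarrow> pic_vec v g $ i - ((- \<epsilon>) *\<^sub>R v s) \<bullet> v i > 0) \<and>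
          (i \<notin> insert s {i. g (v i) > 0} \<longrightarrow> pic_vec v g $ i - ((- \<epsilon>) *\<^sub>R v s) \<bullet> v i < 0)"
    proof (cases "i = s")
      case True then show ?thesis using assms(2) epos vv by (simp add: L)
    next
      case False
      have "\<bar>\<epsilon> * (v s \<bullet> v i)\<bar> < \<bar>g (v i)\<bar>" using small[OF False] epos by (simp add: abs_mult)
      then show ?thesis using assms(3) False by (auto simp: L abs_less_iff)
    qed
  qed
qed



lemma orth3_zero:
  fixes e1 e2 u x :: "real^3"
  assumes "e1 \<noteq> 0" "e2 \<noteq> 0" "u \<noteq> 0" "e1 \<bullet> e2 = 0" "e1 \<bullet> u = 0" "e2 \<bullet> u = 0"
    "x \<bullet> e1 = 0" "x \<bullet> e2 = 0" "x \<bullet> u = 0"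
  shows "x = 0"
proof (rule ccontr)
  assume x: "x \<noteq> 0"
  have d: "e1 \<noteq> e2" "e1 \<noteq> u" "e2 \<noteq> u" "x \<noteq> e1" "x \<noteq> e2" "x \<noteq> u"
    using assms x by auto
  have sym: "e2 \<bullet> e1 = 0" "u \<bullet> e1 = 0" "u \<bullet> e2 = 0" "e1 \<bullet> x = 0" "e2 \<bullet> x = 0" "u \<bullet> x = 0"
    using assms by (simp_all add: inner_commute)
  have po: "pairwise orthogonal {e1,e2,u,x}"
    unfolding pairwise_def orthogonal_def using assms sym by auto
  have "independent {e1,e2,u,x}"
    by (rule pairwise_orthogonal_independent[OF po]) (use assms x in auto)
  then have "card {e1,e2,u,x} \<le> DIM(real^3)" using independent_bound by blast
  moreover have "card {e1,e2,u,x} = 4" using d by auto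
  ultimately show False by simp
qed

lemma sum_in_cch:
  fixes w :: "'a \<Rightarrow> 'b::real_vector"
  shows "finite A \<Longrightarrow> \<forall>i\<in>A. 0 \<le> c i \<Longrightarrow> \<forall>i\<in>A. w i \<in> T \<Longrightarrow> (\<Sum>i\<in>A. c i *\<^sub>R w i) \<in> convex_cone hull T"
proof (induct A rule: finite_induct)
  case empty then show ?case by (simp add: convex_cone_hull_contains_0)
next
  case (insert x F)
  have "c x *\<^sub>R w x \<in> convex_cone hull T"
    using insert by (intro convex_cone_hull_mul hull_inc) auto
  moreover have "(\<Sum>i\<in>F. c i *\<^sub>R w i) \<in> convex_cone hull T" using insert by auto
  ultimately show ?case using insert by (simp add: convex_cone_hull_add)
qed

lemma cone_of_add:
  fixes v :: "'n::finite \<Rightarrow> real^3"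
  assumes "x \<in> cone_of v S" "y \<in> cone_of v S"
  shows "x + y \<in> cone_of v S"
proof -
  obtain c where c: "\<forall>i\<in>S. 0 \<le> c i" "x = (\<Sum>i\<in>S. c i *\<^sub>R v i)" using assms(1) unfolding cone_of_def by blast
  obtain d where d: "\<forall>i\<in>S. 0 \<le> d i" "y = (\<Sum>i\<in>S. d i *\<^sub>R v i)" using assms(2) unfolding cone_of_def by blast
  have "x + y = (\<Sum>i\<in>S. (c i + d i) *\<^sub>R v i)"
    unfolding c(2) d(2) by (simp add: sum.distrib scaleR_add_left)
  moreover have "\<forall>i\<in>S. 0 \<le> c i + d i" using c(1) d(1) by auto
  ultimately show ?thesis unfolding cone_of_def by (intro CollectI exI[of _ "\<lambda>i. c i + d i"]) simp
qed

lemma cone_of_scale: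
  fixes v :: "'n::finite \<Rightarrow> real^3"
  assumes "x \<in> cone_of v S" "0 \<le> a"
  shows "a *\<^sub>R x \<in> cone_of v S"
proof -
  obtain c where c: "\<forall>i\<in>S. 0 \<le> c i" "x = (\<Sum>i\<in>S. c i *\<^sub>R v i)" using assms(1) unfolding cone_of_def by blast
  have "a *\<^sub>R x = (\<Sum>i\<in>S. (a * c i) *\<^sub>R v i)" unfolding c(2) by (simp add: scaleR_sum_right)
  moreover have "\<forall>i\<in>S. 0 \<le> a * c i" using c(1) assms(2) by auto
  ultimately show ?thesis unfolding cone_of_def by (intro CollectI exI[of _ "\<lambda>i. a * c i"]) simp
qed

lemma zero_cone_of: "0 \<in> cone_of v S"
  unfolding cone_of_def by (rule CollectI, rule exI[of _ "\<lambda>_. 0"]) simp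

lemma convex_cone_cone_of: "convex_cone (cone_of (v :: 'n::finite \<Rightarrow> real^3) S)"
proof -
  have "convex (cone_of v S)"
    unfolding convex_def by (intro ballI allI impI cone_of_add cone_of_scale) auto
  moreover have "conic (cone_of v S)"
    unfolding conic_def by (intro allI impI cone_of_scale) auto
  moreover have "cone_of v S \<noteq> {}" using zero_cone_of by blast
  ultimately show ?thesis unfolding convex_cone_def by blast
qed

lemma cone_of_hull: "cone_of (v :: 'n::finite \<Rightarrow> real^3) S = convex_cone hull (v ` S)"
proof
  show "cone_of v S \<subseteq> convex_cone hull (v ` S)"
    unfolding cone_of_def by (auto intro!: sum_in_cch)
  show "convex_cone hull (v ` S) \<subseteq> cone_of v S"
    by (rule hull_minimal) (auto simp: mem_cone_self convex_cone_cone_of)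
qed

lemma closed_cone_of: "closed (cone_of (v :: 'n::finite \<Rightarrow> real^3) S)"
  by (simp add: cone_of_hull closed_convex_cone_hull)

lemma delta_sum:
  fixes w :: "'a \<Rightarrow> 'b::real_vector"
  shows "finite T \<Longrightarrow> a \<in> T \<Longrightarrow> (\<Sum>i\<in>T. (if i = a then k else 0) *\<^sub>R w i) = k *\<^sub>R w a"
proof -
  assume "finite T" "a \<in> T"
  have "(\<Sum>i\<in>T. (if i = a then k else 0) *\<^sub>R w i) = (\<Sum>i\<in>T. if i = a then k *\<^sub>R w i else 0)"
    by (rule sum.cong) auto
  then show ?thesis using \<open>finite T\<close> \<open>a \<in> T\<close> by (simp add: sum.delta)
qed

lemma cross_polar:
  fixes a b :: complex
  assumes "a \<noteq> 0" "b \<noteq> 0"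
  shows "Re a * Im b - Im a * Re b = cmod a * cmod b * sin (Arg b - Arg a)"
proof -
  have ra: "Re a = cmod a * cos (Arg a)" "Im a = cmod a * sin (Arg a)"
    using assms cos_Arg sin_Arg by auto
  have rb: "Re b = cmod b * cos (Arg b)" "Im b = cmod b * sin (Arg b)"
    using assms cos_Arg sin_Arg by auto
  show ?thesis by (simp add: ra rb sin_diff algebra_simps)
qed

locale star =
  fixes v :: "'n::{finite,linorder} \<Rightarrow> real^3" and F :: "'n set set" and s :: 'n
    and js :: "'n list" and e1 e2 :: "real^3"
  assumes csf: "complete_simplicial_fan v F"
    and dist: "distinct js" and setjs: "set js = nbrs F s"
    and e11: "e1 \<bullet> e1 = 1" and e22: "e2 \<bullet> e2 = 1" and e12: "e1 \<bullet> e2 = 0"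
    and e1s: "e1 \<bullet> v s = 0" and e2s: "e2 \<bullet> v s = 0"
    and sorted: "sorted_wrt (>) (map (\<lambda>j. Arg (Complex (v j \<bullet> e1) (v j \<bullet> e2))) js)"
begin

definition pj :: "real^3 \<Rightarrow> complex" where "pj x = Complex (x \<bullet> e1) (x \<bullet> e2)"
definition z :: "'n \<Rightarrow> complex" where "z j = pj (v j)"

lemma pj_sum: "pj (\<Sum>i\<in>A. c i *\<^sub>R w i) = (\<Sum>i\<in>A. of_real (c i) * pj (w i))"
  by (simp add: pj_def complex_eq_iff Re_sum Im_sum inner_sum_left)

lemma pj_add: "pj (x + y) = pj x + pj y" by (simp add: pj_def complex_eq_iff inner_add_left)
lemma pj_diff: "pj (x - y) = pj x - pj y" by (simp add: pj_def complex_eq_iff inner_diff_left)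
lemma pj_scale: "pj (a *\<^sub>R x) = of_real a * pj x" by (simp add: pj_def complex_eq_iff)

lemma vs_nz: "v s \<noteq> 0" using fan_v_nonzero[OF csf] .

lemma pj_vs: "pj (v s) = 0" using e1s e2s by (simp add: pj_def inner_commute complex_eq_iff)

lemma kernel:
  assumes "pj x = 0" shows "\<exists>t. x = t *\<^sub>R v s"
proof -
  have x1: "x \<bullet> e1 = 0" and x2: "x \<bullet> e2 = 0" using assms by (auto simp: pj_def complex_eq_iff)
  define t where "t = (x \<bullet> v s) / (v s \<bullet> v s)"
  have vv: "v s \<bullet> v s \<noteq> 0" using vs_nz by simp
  have "x - t *\<^sub>R v s = 0"
  proof (rule orth3_zero[of e1 e2 "v s"])
    show "e1 \<noteq> 0" "e2 \<noteq> 0" using e11 e22 by auto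
    show "v s \<noteq> 0" by (rule vs_nz)
    show "e1 \<bullet> e2 = 0" "e1 \<bullet> v s = 0" "e2 \<bullet> v s = 0" using e12 e1s e2s by auto
    have v1: "v s \<bullet> e1 = 0" "v s \<bullet> e2 = 0" using e1s e2s by (simp_all add: inner_commute)
    show "(x - t *\<^sub>R v s) \<bullet> e1 = 0" using x1 v1 by (simp add: inner_diff_left)
    show "(x - t *\<^sub>R v s) \<bullet> e2 = 0" using x2 v1 by (simp add: inner_diff_left)
    show "(x - t *\<^sub>R v s) \<bullet> v s = 0" using vv by (simp add: inner_diff_left t_def)
  qed
  then show ?thesis by auto
qed

lemma finite_F: "finite F" by (rule finite_subset[of _ UNIV]) auto

lemma cover:
  assumes "d \<noteq> 0"
  shows "\<exists>S\<in>F. s \<in> S \<and> (\<exists>c. (\<forall>i\<in>S. 0 \<le> c i) \<and> d = (\<Sum>i\<in>S. of_real (c i) * z i))"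
proof -
  let ?Fo = "{S\<in>F. s \<notin> S}"
  let ?U = "\<Union>S\<in>?Fo. cone_of v S"
  have cl: "closed ?U" by (rule closed_UN) (auto simp: closed_cone_of intro: finite_subset[OF _ finite_F])
  have nin: "v s \<notin> ?U" using fan_ray[OF csf] by blast
  have "open (- ?U)" using cl by (simp only: closed_def)
  then obtain r where r: "r > 0" "ball (v s) r \<subseteq> - ?U" using nin open_contains_ball by blast
  define D where "D = Re d *\<^sub>R e1 + Im d *\<^sub>R e2"
  have e21: "e2 \<bullet> e1 = 0" using e12 by (simp add: inner_commute)
  have pjD: "pj D = d" by (simp add: D_def pj_def inner_add_left e11 e22 e12 e21 complex_eq_iff)
  define t where "t = r / (2 * (norm D + 1))"
  have "norm D \<ge> 0" by simp
  then have "norm D + 1 > 0" by linarith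
  then have pos2: "2 * (norm D + 1) > 0" by simp
  then have tpos: "t > 0" using r(1) unfolding t_def by (rule divide_pos_pos[rotated])
  have "t * norm D < r"
  proof -
    have "t * norm D = r * (norm D / (2 * (norm D + 1)))" by (simp add: t_def)
    also have "\<dots> < r * 1"
    proof (intro mult_strict_left_mono r(1))
      have "norm D < 1 * (2 * (norm D + 1))" using norm_ge_zero[of D] by (smt (verit))
      then show "norm D / (2 * (norm D + 1)) < 1" using pos2 by (simp only: pos_divide_less_eq)
    qed
    finally show ?thesis by simp
  qed
  define x where "x = v s + t *\<^sub>R D"
  have "dist (v s) x < r" using \<open>t * norm D < r\<close> tpos by (simp add: x_def dist_norm)
  then have xU: "x \<notin> ?U" using r by auto
  obtain S where S: "S \<in> F" "x \<in> cone_of v S" using csf_parts(7)[OF csf] by blast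
  have sS: "s \<in> S" using S xU by blast
  obtain c where c: "\<forall>i\<in>S. 0 \<le> c i" "x = (\<Sum>i\<in>S. c i *\<^sub>R v i)" using S(2) unfolding cone_of_def by blast
  have "of_real t * d = pj x" by (simp add: x_def pj_add pj_scale pj_vs pjD)
  also have "\<dots> = (\<Sum>i\<in>S. of_real (c i) * z i)" by (simp add: c(2) pj_sum z_def)
  finally have e: "of_real t * d = (\<Sum>i\<in>S. of_real (c i) * z i)" .
  have "d = of_real (1/t) * (of_real t * d)" using tpos by simp
  also have "\<dots> = (\<Sum>i\<in>S. of_real (c i / t) * z i)" by (simp add: e sum_distrib_left)
  finally show ?thesis using S(1) sS c(1) tpos by (intro bexI[OF _ S(1)] conjI exI[of _ "\<lambda>i. c i / t"]) auto
qed

lemma nbrsD: "c \<in> nbrs F s \<Longrightarrow> c \<noteq> s \<and> {s, c} \<in> F" by (simp add: nbrs_def)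

lemma empty_sector:
  assumes "{s,m,m'} \<in> F" "m \<noteq> s" "m' \<noteq> s" "c \<in> nbrs F s" "c \<noteq> m" "c \<noteq> m'" "0 \<le> \<alpha>" "0 \<le> \<beta>"
    "z c = of_real \<alpha> * z m + of_real \<beta> * z m'"
  shows False
proof -
  have "pj (v c - \<alpha> *\<^sub>R v m - \<beta> *\<^sub>R v m') = 0" using assms(9) by (simp add: pj_diff pj_scale z_def)
  then obtain t where t: "v c - \<alpha> *\<^sub>R v m - \<beta> *\<^sub>R v m' = t *\<^sub>R v s" using kernel by blast
  have cs: "c \<noteq> s" "{s,c} \<in> F" using nbrsD[OF assms(4)] by auto
  define p where "p = v c + \<bar>t\<bar> *\<^sub>R v s"
  have p1: "p \<in> cone_of v {s,c}"
  proof -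
    have "(\<Sum>i\<in>{s,c}. (if i = s then \<bar>t\<bar> else 1) *\<^sub>R v i) = p"
      using cs by (simp add: p_def)
    then show ?thesis unfolding cone_of_def by (intro CollectI exI[of _ "\<lambda>i. if i = s then \<bar>t\<bar> else 1"]) auto
  qed
  have p2: "p \<in> cone_of v {s,m,m'}"
  proof -
    let ?T = "{s,m,m'}"
    define cf where "cf i = (if i = s then t + \<bar>t\<bar> else 0) + (if i = m then \<alpha> else 0) + (if i = m' then \<beta> else 0)" for i
    have "(\<Sum>i\<in>?T. cf i *\<^sub>R v i) = (\<Sum>i\<in>?T. (if i = s then t + \<bar>t\<bar> else 0) *\<^sub>R v i)
        + (\<Sum>i\<in>?T. (if i = m then \<alpha> else 0) *\<^sub>R v i) + (\<Sum>i\<in>?T. (if i = m' then \<beta> else 0) *\<^sub>R v i)"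
      by (simp add: cf_def scaleR_add_left sum.distrib)
    also have "\<dots> = (t + \<bar>t\<bar>) *\<^sub>R v s + \<alpha> *\<^sub>R v m + \<beta> *\<^sub>R v m'"
      by (simp add: delta_sum)
    also have "\<dots> = p" using t by (simp add: p_def algebra_simps)
    finally have "(\<Sum>i\<in>?T. cf i *\<^sub>R v i) = p" .
    moreover have "\<forall>i\<in>?T. 0 \<le> cf i" using assms(7,8) by (auto simp: cf_def)
    ultimately show ?thesis unfolding cone_of_def by (intro CollectI exI[of _ cf]) simp
  qed
  have ss: "{s,c} \<inter> {s,m,m'} = {s}" using cs assms(5,6) by auto
  have "cone_of v {s,c} \<inter> cone_of v {s,m,m'} = cone_of v ({s,c} \<inter> {s,m,m'})"
    using csf_parts(6)[OF csf cs(2) assms(1)] .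
  then have "cone_of v {s,c} \<inter> cone_of v {s,m,m'} = cone_of v {s}" by (simp only: ss)
  then have "p \<in> cone_of v {s}" using p1 p2 by blast
  then obtain \<mu> where "p = \<mu> *\<^sub>R v s" unfolding cone_of_def by auto
  then have vc: "v c = (\<mu> - \<bar>t\<bar>) *\<^sub>R v s" by (simp add: p_def algebra_simps)
  have neq: "v c \<noteq> v s" using fan_inj[OF csf] cs(1) by (auto dest: injD)
  have "v c \<in> span ({v s, v c} - {v c})" using vc neq by (simp add: span_base span_mul)
  then have "dependent (v ` {s,c})" unfolding dependent_def by auto
  then show False using csf_parts(5)[OF csf cs(2)] by blast
qed

lemma indep_cross:
  assumes "{s,m,m'} \<in> F" "m \<noteq> m'" "m \<noteq> s" "m' \<noteq> s"
  shows "Re (z m) * Im (z m') - Im (z m) * Re (z m') \<noteq> 0"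
proof
  assume cr: "Re (z m) * Im (z m') - Im (z m) * Re (z m') = 0"
  obtain a b where ab: "a \<noteq> 0 \<or> b \<noteq> 0" "of_real a * z m + of_real b * z m' = 0"
  proof (cases "z m' = 0")
    case True then show ?thesis using that[of 0 1] by simp
  next
    case False
    define N where "N = (Re (z m'))\<^sup>2 + (Im (z m'))\<^sup>2"
    have N: "N \<noteq> 0" using False by (simp add: N_def complex_eq_iff sum_power2_eq_zero_iff)
    define b where "b = - (Re (z m) * Re (z m') + Im (z m) * Im (z m'))"
    have r: "N * Re (z m) + b * Re (z m') = Im (z m') * (Re (z m) * Im (z m') - Im (z m) * Re (z m'))"
      by (simp add: N_def b_def algebra_simps power2_eq_square)
    have i: "N * Im (z m) + b * Im (z m') = Re (z m') * (Im (z m) * Re (z m') - Re (z m) * Im (z m'))"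
      by (simp add: N_def b_def algebra_simps power2_eq_square)
    have "Im (z m) * Re (z m') - Re (z m) * Im (z m') = 0" using cr by simp
    then have "of_real N * z m + of_real b * z m' = 0" using r i cr by (simp add: complex_eq_iff)
    then show ?thesis using that[of N b] N by simp
  qed
  have "pj (a *\<^sub>R v m + b *\<^sub>R v m') = 0" using ab(2) by (simp add: pj_add pj_scale z_def)
  then obtain t where t: "a *\<^sub>R v m + b *\<^sub>R v m' = t *\<^sub>R v s" using kernel by blast
  have inj: "inj v" using fan_inj[OF csf] .
  have d: "v s \<noteq> v m" "v s \<noteq> v m'" "v m \<noteq> v m'" using assms inj by (auto dest: injD)
  define u where "u y = (if y = v s then - t else if y = v m then a else if y = v m' then b else 0)" for y
  have "(\<Sum>y\<in>{v s, v m, v m'}. u y *\<^sub>R y) = - t *\<^sub>R v s + a *\<^sub>R v m + b *\<^sub>R v m'"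
    using d by (simp add: u_def)
  also have "\<dots> = 0" using t by (simp add: algebra_simps)
  finally have sum0: "(\<Sum>y\<in>{v s, v m, v m'}. u y *\<^sub>R y) = 0" .
  have d': "v m \<noteq> v s" "v m' \<noteq> v s" "v m' \<noteq> v m" using d by auto
  have ex: "\<exists>y\<in>{v s, v m, v m'}. u y \<noteq> 0"
  proof (cases "a \<noteq> 0")
    case True then show ?thesis using d' by (intro bexI[of _ "v m"]) (auto simp: u_def)
  next
    case False then have "b \<noteq> 0" using ab(1) by simp
    then show ?thesis using d' by (intro bexI[of _ "v m'"]) (auto simp: u_def)
  qed
  have fin: "finite {v s, v m, v m'}" by simp
  have dep: "dependent {v s, v m, v m'}" using ex sum0 real_vector.dependent_finite[OF fin] by blast
  have img: "v ` {s,m,m'} = {v s, v m, v m'}" by simp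
  have ind: "independent {v s, v m, v m'}" using csf_parts(5)[OF csf assms(1)] unfolding img .
  show False using ind dep by (rule notE)
qed

end


lemma sin_pos_iff:
  assumes "-pi < a" "a \<le> pi" "-pi < b" "b \<le> pi"
  shows "(0 < sin (a - b)) = (0 < a - b \<and> a - b < pi \<or> a - b < -pi)"
proof -
  have r: "-2*pi < a - b" "a - b < 2*pi" using assms by auto
  consider "0 < a - b \<and> a - b < pi" | "a - b < -pi" | "-pi < a - b \<and> a - b < 0" | "pi < a - b"
    | "a - b = 0 \<or> a - b = pi \<or> a - b = -pi" by linarith
  then show ?thesis
  proof cases
    case 1 then show ?thesis using sin_gt_zero[of "a - b"] by auto
  next
    case 2
    have e: "sin (a - b) = sin (-(a - b + pi))" by (simp only: sin_minus sin_periodic_pi minus_minus)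
    moreover have "sin (-(a - b + pi)) > 0" using 2 r by (intro sin_gt_zero) auto
    ultimately show ?thesis using 2 by (simp only: e) simp
  next
    case 3
    have e: "sin (a - b) = - sin (b - a)" by (metis minus_diff_eq sin_minus)
    have "sin (b - a) > 0" using 3 by (intro sin_gt_zero) auto
    then show ?thesis using 3 by (simp add: e)
  next
    case 4
    have "sin (a - b) = - sin (a - b - pi)" by (simp add: sin_diff)
    moreover have "sin (a - b - pi) > 0" using 4 r by (intro sin_gt_zero) auto
    moreover have "\<not> (a - b < -pi)" using 4 pi_gt_zero by linarith
    ultimately show ?thesis using 4 by auto
  next
    case 5 then show ?thesis by auto
  qed
qed

lemma sin_neg_iff:
  assumes "-pi < a" "a \<le> pi" "-pi < b" "b \<le> pi"
  shows "(sin (a - b) < 0) = (-pi < a - b \<and> a - b < 0 \<or> pi < a - b)"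
proof -
  have "sin (a - b) = - sin (b - a)" by (metis minus_diff_eq sin_minus)
  then show ?thesis using sin_pos_iff[of b a] assms by auto
qed

lemmas sin_sgn = sin_pos_iff sin_neg_iff

lemma F1_short:
  fixes A B C :: real
  assumes "-pi < B" "B < C" "C < A" "A \<le> pi" "A - B < pi"
  shows "0 \<le> sin (B - C) * sin (B - A) \<and> 0 \<le> sin (C - A) * sin (B - A)"
proof -
  have "sin (B - C) < 0" "sin (B - A) < 0" "sin (C - A) < 0"
    using assms by (subst sin_neg_iff; linarith)+
  then show ?thesis by (simp add: zero_le_mult_iff)
qed

lemma F1_long:
  fixes A B C :: real
  assumes "-pi < B" "B < A" "A \<le> pi" "A - B > pi" "-pi < C" "C \<le> pi" "C > A \<or> C < B"
  shows "0 \<le> sin (B - C) * sin (B - A) \<and> 0 \<le> sin (C - A) * sin (B - A)"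
proof -
  have "sin (B - C) > 0" "sin (B - A) > 0" "sin (C - A) > 0"
    using assms by (subst sin_pos_iff; linarith)+
  then show ?thesis by (simp add: zero_le_mult_iff)
qed

definition insec :: "real \<Rightarrow> real \<Rightarrow> real \<Rightarrow> bool" where
  "insec P Q X \<longleftrightarrow> 0 < sin (Q - X) * sin (Q - P) \<and> 0 < sin (X - P) * sin (Q - P)"

definition insec0 :: "real \<Rightarrow> real \<Rightarrow> real \<Rightarrow> bool" where
  "insec0 P Q X \<longleftrightarrow> 0 \<le> sin (Q - X) * sin (Q - P) \<and> 0 \<le> sin (X - P) * sin (Q - P)"

lemma insec_unfold:
  assumes "-pi < P" "P \<le> pi" "-pi < Q" "Q \<le> pi" "-pi < X" "X \<le> pi"
  shows "insec P Q X \<longleftrightarrow>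
    ((0 < Q - X \<and> Q - X < pi \<or> Q - X < -pi) \<and> (0 < Q - P \<and> Q - P < pi \<or> Q - P < -pi) \<or>
     (-pi < Q - X \<and> Q - X < 0 \<or> pi < Q - X) \<and> (-pi < Q - P \<and> Q - P < 0 \<or> pi < Q - P)) \<and>
    ((0 < X - P \<and> X - P < pi \<or> X - P < -pi) \<and> (0 < Q - P \<and> Q - P < pi \<or> Q - P < -pi) \<or>
     (-pi < X - P \<and> X - P < 0 \<or> pi < X - P) \<and> (-pi < Q - P \<and> Q - P < 0 \<or> pi < Q - P))"
  unfolding insec_def zero_less_mult_iff using assms by (simp add: sin_sgn)

lemma gap_internal:
  assumes b: "-pi < P" "P \<le> pi" "-pi < Q" "Q \<le> pi" "-pi < A" "A \<le> pi" "-pi < B" "B \<le> pi"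
    and "B < \<phi>" "\<phi> < A" "P \<le> B \<or> A \<le> P" "Q \<le> B \<or> A \<le> Q" "insec P Q \<phi>"
  shows "(A = P \<or> A = Q \<or> insec P Q A) \<and> (B = P \<or> B = Q \<or> insec P Q B)"
proof -
  have bphi: "-pi < \<phi>" "\<phi> \<le> pi" using assms by linarith+
  show ?thesis using assms(9-13) unfolding insec_unfold[OF b(1-4) bphi] insec_unfold[OF b(1-4) b(5,6)] insec_unfold[OF b(1-4) b(7,8)]
    using b by linarith
qed

lemma gap_wrap:
  assumes b: "-pi < P" "P \<le> pi" "-pi < Q" "Q \<le> pi" "-pi < A" "A \<le> pi" "-pi < B" "B \<le> pi"
    and "-pi < \<phi>" "\<phi> < B" "B \<le> P" "P \<le> A" "B \<le> Q" "Q \<le> A" "insec P Q \<phi>"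
  shows "(A = P \<or> A = Q \<or> insec P Q A) \<and> (B = P \<or> B = Q \<or> insec P Q B)"
proof -
  have bphi: "-pi < \<phi>" "\<phi> \<le> pi" using assms by linarith+
  show ?thesis using assms(9-15) unfolding insec_unfold[OF b(1-4) bphi] insec_unfold[OF b(1-4) b(5,6)] insec_unfold[OF b(1-4) b(7,8)]
    using b by linarith
qed

lemma two_sectors:
  assumes b: "-pi < P" "P \<le> pi" "-pi < Q" "Q \<le> pi" "-pi < A" "A \<le> pi" "-pi < B" "B \<le> pi"
    and "B < \<phi>1" "\<phi>1 < A" "-pi < \<phi>2" "\<phi>2 < B" "P = A \<and> Q = B \<or> P = B \<and> Q = A"
    "insec P Q \<phi>1" "insec P Q \<phi>2"
  shows False
proof -
  have bphi: "-pi < \<phi>1" "\<phi>1 \<le> pi" "-pi < \<phi>2" "\<phi>2 \<le> pi" using assms by linarith+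
  show ?thesis using assms(9-15) unfolding insec_unfold[OF b(1-4) bphi(1,2)] insec_unfold[OF b(1-4) bphi(3,4)]
    using b by linarith
qed



lemma comb_two:
  fixes l :: nat and p :: "nat \<Rightarrow> bool"
  assumes l: "0 < l" and npos: "\<exists>k<l. \<not> p k" and pos: "\<exists>k<l. p k"
    and noA: "\<And>A. A \<subseteq> {k. k < l \<and> p k} \<Longrightarrow>
        (\<forall>k<l. p k \<and> p ((k + 1) mod l) \<longrightarrow> (k \<in> A \<longleftrightarrow> (k + 1) mod l \<in> A)) \<Longrightarrow>
        A \<noteq> {} \<Longrightarrow> {k. k < l \<and> p k} \<subseteq> A"
  shows "card {k. k < l \<and> p k \<noteq> p ((k + 1) mod l)} = 2"
proof -
  obtain n0 where n0: "n0 < l" "\<not> p n0" using npos by blast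
  define r where "r t = (n0 + t) mod l" for t
  define q where "q t = p (r t)" for t
  have r_lt: "r t < l" for t using l by (simp add: r_def)
  have rsuc: "(r t + 1) mod l = r ((t + 1) mod l)" for t
    by (simp add: r_def mod_Suc_eq mod_add_right_eq)
  have rinj: "inj_on r {..<l}"
  proof (rule inj_onI)
    fix a b assume ab: "a \<in> {..<l}" "b \<in> {..<l}" "r a = r b"
    then have "(n0 + a) mod l = (n0 + b) mod l" by (simp add: r_def)
    have key: "x = y" if "x \<le> y" "y < l" "(n0 + x) mod l = (n0 + y) mod l" for x y
    proof -
      have "l dvd (n0 + y) - (n0 + x)" using mod_eq_dvd_iff_nat[of "n0 + x" "n0 + y" l] that by simp
      then have "l dvd y - x" by simp
      moreover have "y - x < l" using that by simp
      ultimately have "y - x = 0" using nat_dvd_not_less by (metis gr0I)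
      then show ?thesis using that by simp
    qed
    show "a = b"
    proof (cases "a \<le> b")
      case True then show ?thesis using key[of a b] ab \<open>(n0 + a) mod l = (n0 + b) mod l\<close> by simp
    next
      case False then show ?thesis using key[of b a] ab \<open>(n0 + a) mod l = (n0 + b) mod l\<close> by simp
    qed
  qed
  have rsurj: "r ` {..<l} = {..<l}"
  proof -
    have "r ` {..<l} \<subseteq> {..<l}" using r_lt by auto
    moreover have "card (r ` {..<l}) = card {..<l}" using rinj by (simp add: card_image)
    ultimately show ?thesis by (simp add: card_subset_eq)
  qed
  have q0: "\<not> q 0" using n0 by (simp add: q_def r_def)
  obtain k1 where k1: "k1 < l" "p k1" using pos by blast
  obtain t1 where t1: "t1 < l" "r t1 = k1" using rsurj k1(1) by (metis imageE lessThan_iff)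
  have qt1: "q t1" using t1 k1 by (simp add: q_def)
  define f where "f = (LEAST t. q t)"
  have qf: "q f" using LeastI[of q t1] qt1 by (simp add: f_def)
  have f_le: "f \<le> t1" using Least_le[of q t1] qt1 by (simp add: f_def)
  have f_min: "\<not> q t" if "t < f" for t using not_less_Least[of t q] that by (simp add: f_def)
  have f_pos: "0 < f" using qf q0 by (cases f) auto
  have f_lt: "f < l" using f_le t1 by simp
  define e where "e = (LEAST t. f < t \<and> (t = l \<or> \<not> q t))"
  have e1: "f < e \<and> (e = l \<or> \<not> q e)" using LeastI[of "\<lambda>t. f < t \<and> (t = l \<or> \<not> q t)" l] f_lt
    by (simp add: e_def)
  have e_le: "e \<le> l" using Least_le[of "\<lambda>t. f < t \<and> (t = l \<or> \<not> q t)" l] f_lt by (simp add: e_def)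
  have e_min: "q t" if "f \<le> t" "t < e" for t
  proof (cases "t = f")
    case True then show ?thesis using qf by simp
  next
    case False
    then have "f < t" using that by simp
    moreover have "t \<noteq> l" using that e_le by simp
    ultimately show ?thesis using not_less_Least[of t "\<lambda>t. f < t \<and> (t = l \<or> \<not> q t)"] that
      by (auto simp: e_def)
  qed
  define A where "A = r ` {f..<e}"
  have A_sub: "A \<subseteq> {k. k < l \<and> p k}" using e_min r_lt by (auto simp: A_def q_def)
  have A_ne: "A \<noteq> {}" using e1 by (auto simp: A_def)
  have memA: "r t \<in> A \<longleftrightarrow> f \<le> t \<and> t < e" if "t < l" for t
  proof
    assume "r t \<in> A"
    then obtain u where u: "f \<le> u" "u < e" "r t = r u" by (auto simp: A_def)
    then have "t = u" using rinj that e_le by (auto dest: inj_onD)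
    then show "f \<le> t \<and> t < e" using u by simp
  qed (auto simp: A_def)
  have closed: "\<forall>k<l. p k \<and> p ((k + 1) mod l) \<longrightarrow> (k \<in> A \<longleftrightarrow> (k + 1) mod l \<in> A)"
  proof (intro allI impI)
    fix k assume k: "k < l" "p k \<and> p ((k + 1) mod l)"
    obtain t where t: "t < l" "r t = k" using rsurj k(1) by (metis imageE lessThan_iff)
    have qt: "q t" "q ((t + 1) mod l)" using k t rsuc[of t] by (auto simp: q_def)
    have tl: "t + 1 < l"
    proof (rule ccontr)
      assume "\<not> t + 1 < l" then have "t + 1 = l" using t by simp
      then show False using qt(2) q0 by simp
    qed
    have m: "(t + 1) mod l = t + 1" using tl by simp
    have "f \<le> t \<and> t < e \<longleftrightarrow> f \<le> t + 1 \<and> t + 1 < e"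
    proof
      assume a: "f \<le> t \<and> t < e"
      have "t + 1 \<noteq> e"
      proof
        assume "t + 1 = e" then have "\<not> q (t + 1)" using e1 tl by auto
        then show False using qt(2) m by simp
      qed
      then show "f \<le> t + 1 \<and> t + 1 < e" using a by auto
    next
      assume a: "f \<le> t + 1 \<and> t + 1 < e"
      have "t + 1 \<noteq> f"
      proof
        assume "t + 1 = f" then have "t < f" by simp
        then show False using f_min qt(1) by blast
      qed
      then show "f \<le> t \<and> t < e" using a by auto
    qed
    then show "k \<in> A \<longleftrightarrow> (k + 1) mod l \<in> A"
      using memA[of t] memA[of "t + 1"] t tl rsuc[of t] m by simp
  qed
  have allA: "{k. k < l \<and> p k} \<subseteq> A" using noA[OF A_sub closed A_ne] .
  have qiff: "q t \<longleftrightarrow> f \<le> t \<and> t < e" if "t < l" for t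
  proof
    assume "q t"
    then have "r t \<in> A" using allA r_lt by (auto simp: q_def)
    then show "f \<le> t \<and> t < e" using memA that by simp
  qed (use e_min in auto)
  have C: "{k. k < l \<and> p k \<noteq> p ((k + 1) mod l)} = r ` {t. t < l \<and> q t \<noteq> q ((t + 1) mod l)}"
  proof
    show "{k. k < l \<and> p k \<noteq> p ((k + 1) mod l)} \<subseteq> r ` {t. t < l \<and> q t \<noteq> q ((t + 1) mod l)}"
    proof
      fix k assume k: "k \<in> {k. k < l \<and> p k \<noteq> p ((k + 1) mod l)}"
      obtain t where t: "t < l" "r t = k" using rsurj k by (metis (no_types, lifting) imageE lessThan_iff mem_Collect_eq)
      then show "k \<in> r ` {t. t < l \<and> q t \<noteq> q ((t + 1) mod l)}" using k rsuc[of t] by (auto simp: q_def)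
    qed
  next
    show "r ` {t. t < l \<and> q t \<noteq> q ((t + 1) mod l)} \<subseteq> {k. k < l \<and> p k \<noteq> p ((k + 1) mod l)}"
      using r_lt rsuc by (auto simp: q_def)
  qed
  have D: "{t. t < l \<and> q t \<noteq> q ((t + 1) mod l)} = {f - 1, e - 1}"
  proof (intro set_eqI iffI)
    fix t assume "t \<in> {t. t < l \<and> q t \<noteq> q ((t + 1) mod l)}"
    then have t: "t < l" "q t \<noteq> q ((t + 1) mod l)" by auto
    show "t \<in> {f - 1, e - 1}"
    proof (cases "t + 1 < l")
      case True
      then have "q t \<noteq> q (t + 1)" using t by simp
      then have "(f \<le> t \<and> t < e) \<noteq> (f \<le> t + 1 \<and> t + 1 < e)" using qiff t True by simp
      then show ?thesis by auto
    next
      case False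
      then have "t + 1 = l" using t by simp
      then have "q t" using t q0 by auto
      then have "f \<le> t \<and> t < e" using qiff t by simp
      then show ?thesis using \<open>t + 1 = l\<close> e_le by auto
    qed
  next
    fix t assume "t \<in> {f - 1, e - 1}"
    then consider "t = f - 1" | "t = e - 1" by auto
    then show "t \<in> {t. t < l \<and> q t \<noteq> q ((t + 1) mod l)}"
    proof cases
      case 1
      have "t + 1 = f" using 1 f_pos by simp
      then have "q ((t + 1) mod l)" using qf f_lt by simp
      moreover have "\<not> q t" using f_min 1 f_pos by simp
      ultimately show ?thesis using 1 f_lt by auto
    next
      case 2
      have et: "t + 1 = e" using 2 e1 by simp
      have "f \<le> t" "t < e" using 2 e1 by auto
      then have "q t" using e_min by blast
      moreover have "\<not> q ((t + 1) mod l)"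
      proof (cases "e = l")
        case True then show ?thesis using et q0 by simp
      next
        case False then show ?thesis using et e1 e_le by simp
      qed
      ultimately show ?thesis using 2 e_le e1 by auto
    qed
  qed
  have "card {k. k < l \<and> p k \<noteq> p ((k + 1) mod l)} = card {t. t < l \<and> q t \<noteq> q ((t + 1) mod l)}"
    unfolding C by (rule card_image) (rule inj_on_subset[OF rinj], auto)
  also have "\<dots> = 2" unfolding D using e1 f_pos by auto
  finally show ?thesis .
qed



lemma cramer:
  fixes a b w :: complex
  assumes X: "Re a * Im b - Im a * Re b \<noteq> 0"
  shows "w = of_real ((Re w * Im b - Im w * Re b) / (Re a * Im b - Im a * Re b)) * a
           + of_real ((Re a * Im w - Im a * Re w) / (Re a * Im b - Im a * Re b)) * b"
proof -
  define D where "D = Re a * Im b - Im a * Re b"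
  define n1 where "n1 = Re w * Im b - Im w * Re b"
  define n2 where "n2 = Re a * Im w - Im a * Re w"
  have e1: "n1 * Re a + n2 * Re b = Re w * D" by (simp add: n1_def n2_def D_def algebra_simps)
  have e2: "n1 * Im a + n2 * Im b = Im w * D" by (simp add: n1_def n2_def D_def algebra_simps)
  have D0: "D \<noteq> 0" using X by (simp add: D_def)
  have r1: "Re (of_real (n1 / D) * a + of_real (n2 / D) * b) = (n1 * Re a + n2 * Re b) / D"
    by (simp add: add_divide_distrib)
  have r2: "Im (of_real (n1 / D) * a + of_real (n2 / D) * b) = (n1 * Im a + n2 * Im b) / D"
    by (simp add: add_divide_distrib)
  have "w = of_real (n1 / D) * a + of_real (n2 / D) * b"
    using r1 r2 e1 e2 D0 by (simp add: complex_eq_iff)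
  then show ?thesis by (simp add: D_def n1_def n2_def)
qed

lemma card_le2_cases:
  assumes "finite A" "card A \<le> 2"
  shows "A = {} \<or> (\<exists>m. A = {m}) \<or> (\<exists>m m'. m \<noteq> m' \<and> A = {m, m'})"
proof -
  have "card A = 0 \<or> card A = 1 \<or> card A = 2" using assms(2) by linarith
  then show ?thesis using assms(1) by (auto simp: card_1_singleton_iff card_2_iff)
qed

lemma insec_sym: "insec P Q X \<longleftrightarrow> insec Q P X"
proof -
  have "sin (P - X) = - sin (X - P)" "sin (P - Q) = - sin (Q - P)" "sin (X - Q) = - sin (Q - X)"
    by (metis minus_diff_eq sin_minus)+
  then show ?thesis unfolding insec_def by (auto simp: mult.commute)
qed

lemma div_nonneg_of_mult:
  fixes c X :: real
  assumes "0 \<le> c * X" "X \<noteq> 0"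
  shows "0 \<le> c / X"
  using assms by (auto simp: zero_le_mult_iff zero_le_divide_iff)

lemma insec_insec0: "insec P Q X \<Longrightarrow> insec0 P Q X"
  unfolding insec_def insec0_def by auto

context star
begin

definition Th :: "nat \<Rightarrow> real" where "Th k = Arg (z (js ! k))"
definition Tri :: "nat \<Rightarrow> nat \<Rightarrow> bool" where "Tri a b \<longleftrightarrow> {s, js ! a, js ! b} \<in> F"

lemma sorted': "sorted_wrt (>) (map (\<lambda>j. Arg (z j)) js)"
  using sorted by (simp add: z_def pj_def)

lemma Th_dec: "i < j \<Longrightarrow> j < length js \<Longrightarrow> Th j < Th i"
  using sorted_wrt_nth_less[OF sorted', of i j] by (simp add: Th_def)

lemma Th_bnd: "-pi < Th k" "Th k \<le> pi"
  by (simp_all add: Th_def mpi_less_Arg Arg_le_pi)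

lemma Th_mono: "i \<le> j \<Longrightarrow> j < length js \<Longrightarrow> Th j \<le> Th i"
  using Th_dec by (cases "i = j") (auto intro: less_imp_le)

lemma Th_inj: "i < length js \<Longrightarrow> j < length js \<Longrightarrow> Th i = Th j \<Longrightarrow> i = j"
  by (metis Th_dec less_irrefl linorder_neqE_nat)

lemma js_nbr: "k < length js \<Longrightarrow> js ! k \<in> nbrs F s"
  using setjs nth_mem by blast

lemma nbr_js: "j \<in> nbrs F s \<Longrightarrow> \<exists>k<length js. js ! k = j"
  using setjs by (metis in_set_conv_nth)

lemma js_ne_s: "k < length js \<Longrightarrow> js ! k \<noteq> s"
  using js_nbr nbrsD by blast

lemma js_inj: "i < length js \<Longrightarrow> j < length js \<Longrightarrow> js ! i = js ! j \<Longrightarrow> i = j"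
  using dist by (simp add: nth_eq_iff_index_eq)

lemma z_nz:
  assumes "j \<in> nbrs F s" shows "z j \<noteq> 0"
proof
  assume "z j = 0"
  then obtain t where t: "v j = t *\<^sub>R v s" using kernel unfolding z_def by blast
  have js: "j \<noteq> s" "{s,j} \<in> F" using nbrsD[OF assms] by auto
  have neq: "v j \<noteq> v s" using fan_inj[OF csf] js(1) by (auto dest: injD)
  have "v j \<in> span ({v s, v j} - {v j})" using t neq by (simp add: span_base span_mul)
  then have "dependent {v s, v j}" unfolding dependent_def by auto
  moreover have "independent {v s, v j}" using csf_parts(5)[OF csf js(2)] by simp
  ultimately show False by contradiction
qed

lemma z_js_nz: "k < length js \<Longrightarrow> z (js ! k) \<noteq> 0"
  using z_nz js_nbr by blast

lemma Tri_sym: "Tri a b \<longleftrightarrow> Tri b a"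
  unfolding Tri_def by (simp add: insert_commute)

lemma Tri_I:
  assumes "Tri a b" "a < length js" "b < length js" "a \<noteq> b"
  shows "sin (Th b - Th a) \<noteq> 0"
proof -
  have ne: "js ! a \<noteq> js ! b" using js_inj assms by blast
  have "Re (z (js!a)) * Im (z (js!b)) - Im (z (js!a)) * Re (z (js!b)) \<noteq> 0"
    using indep_cross[of "js!a" "js!b"] assms(1) ne js_ne_s assms(2,3) unfolding Tri_def by blast
  then show ?thesis
    using cross_polar[OF z_js_nz[OF assms(2)] z_js_nz[OF assms(3)]] by (simp add: Th_def)
qed

lemma Tri_E:
  assumes "Tri a b" "a < length js" "b < length js" "c < length js" "c \<noteq> a" "c \<noteq> b" "a \<noteq> b"
  shows "\<not> insec0 (Th a) (Th b) (Th c)"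
proof
  assume ins: "insec0 (Th a) (Th b) (Th c)"
  define za where "za = z (js!a)"
  define zb where "zb = z (js!b)"
  define zc where "zc = z (js!c)"
  have nz: "za \<noteq> 0" "zb \<noteq> 0" "zc \<noteq> 0" using z_js_nz assms(2-4) by (auto simp: za_def zb_def zc_def)
  define X where "X = Re za * Im zb - Im za * Re zb"
  have sX: "sin (Th b - Th a) \<noteq> 0" using Tri_I assms by blast
  have Xp: "X = cmod za * cmod zb * sin (Th b - Th a)"
    using cross_polar[OF nz(1,2)] by (simp add: X_def Th_def za_def zb_def)
  have X0: "X \<noteq> 0" using Xp nz sX by simp
  define c1 where "c1 = Re zc * Im zb - Im zc * Re zb"
  define c2 where "c2 = Re za * Im zc - Im za * Re zc"
  have c1p: "c1 = cmod zc * cmod zb * sin (Th b - Th c)"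
    using cross_polar[OF nz(3,2)] by (simp add: c1_def Th_def zc_def zb_def)
  have c2p: "c2 = cmod za * cmod zc * sin (Th c - Th a)"
    using cross_polar[OF nz(1,3)] by (simp add: c2_def Th_def zc_def za_def)
  have cr: "zc = of_real (c1 / X) * za + of_real (c2 / X) * zb"
    using cramer[of za zb zc] X0 unfolding X_def c1_def c2_def by simp
  have p1: "0 \<le> sin (Th b - Th c) * sin (Th b - Th a)" and p2: "0 \<le> sin (Th c - Th a) * sin (Th b - Th a)"
    using ins unfolding insec0_def by auto
  have "c1 * X = (cmod zc * cmod zb * cmod za * cmod zb) * (sin (Th b - Th c) * sin (Th b - Th a))"
    by (simp add: c1p Xp algebra_simps)
  then have "0 \<le> c1 * X" using p1 by simp
  then have a0: "0 \<le> c1 / X" using X0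
    by (rule div_nonneg_of_mult)
  have "c2 * X = (cmod za * cmod zc * cmod za * cmod zb) * (sin (Th c - Th a) * sin (Th b - Th a))"
    by (simp add: c2p Xp algebra_simps)
  then have "0 \<le> c2 * X" using p2 by simp
  then have b0: "0 \<le> c2 / X" using X0
    by (rule div_nonneg_of_mult)
  have ne: "js!c \<noteq> js!a" "js!c \<noteq> js!b" using js_inj assms by blast+
  have tri': "{s, js!a, js!b} \<in> F" using assms(1) unfolding Tri_def .
  have cr': "z (js!c) = of_real (c1 / X) * z (js!a) + of_real (c2 / X) * z (js!b)"
    using cr unfolding za_def zb_def zc_def .
  show False
    by (rule empty_sector[OF tri' js_ne_s[OF assms(2)] js_ne_s[OF assms(3)] js_nbr[OF assms(4)] ne(1) ne(2) a0 b0 cr'])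
qed

lemma cover_js: "i \<in> S \<Longrightarrow> S \<in> F \<Longrightarrow> s \<in> S \<Longrightarrow> i \<noteq> s \<Longrightarrow> i \<in> nbrs F s"
proof -
  assume "i \<in> S" "S \<in> F" "s \<in> S" "i \<noteq> s"
  then have "{s, i} \<in> F" by (intro csf_parts(2)[OF csf \<open>S \<in> F\<close>]) auto
  then show ?thesis using \<open>i \<noteq> s\<close> by (simp add: nbrs_def)
qed

lemma Tri_C:
  assumes "-pi < \<phi>" "\<phi> \<le> pi" "\<And>c. c < length js \<Longrightarrow> \<phi> \<noteq> Th c"
  shows "\<exists>a<length js. \<exists>b<length js. a \<noteq> b \<and> Tri a b \<and> insec (Th a) (Th b) \<phi>"
proof -
  define d where "d = cis \<phi>"
  have dnz: "d \<noteq> 0" by (simp add: d_def)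
  have Ad: "Arg d = \<phi>" using assms(1,2) by (simp add: d_def Arg_cis)
  have noarg: "Arg d \<noteq> Arg (z j)" if jn: "j \<in> nbrs F s" for j
  proof -
    obtain k where "k < length js" "js ! k = j" using nbr_js[OF jn] by blast
    then show ?thesis using assms(3)[of k] Ad by (auto simp: Th_def)
  qed
  obtain S c where S: "S \<in> F" "s \<in> S" "\<forall>i\<in>S. 0 \<le> c i" "d = (\<Sum>i\<in>S. of_real (c i) * z i)"
    using cover[OF dnz] by blast
  have zs: "z s = 0" using pj_vs by (simp add: z_def)
  have d2: "d = (\<Sum>i\<in>S - {s}. of_real (c i) * z i)"
    using S(4) sum.remove[of S s "\<lambda>i. of_real (c i) * z i"] S(2) zs by simp
  have "card S \<le> 3" using face_card[OF csf S(1)] .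
  then have "card (S - {s}) \<le> 2" using S(2) by (simp add: card_Diff_singleton)
  then have cases: "S - {s} = {} \<or> (\<exists>m. S - {s} = {m}) \<or> (\<exists>m m'. m \<noteq> m' \<and> S - {s} = {m, m'})"
    by (intro card_le2_cases) simp
  have nb: "i \<in> nbrs F s" if "i \<in> S - {s}" for i using cover_js that S by blast
  show ?thesis
  proof -
    { assume e: "S - {s} = {}"
      have "d = 0" using d2 unfolding e by simp
      then have False using dnz by simp }
    moreover
    { fix m assume m: "S - {s} = {m}"
      have dm: "d = of_real (c m) * z m" using d2 unfolding m by simp
      have "c m \<noteq> 0" using dm dnz by auto
      then have "c m > 0" using S(3) m by force
      then have "Arg d = Arg (z m)" using dm by simp
      then have False using noarg nb m by blast }
    moreover
    { fix m m' assume mm: "m \<noteq> m'" "S - {s} = {m, m'}"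
      have dm: "d = of_real (c m) * z m + of_real (c m') * z m'" using d2 mm(1) unfolding mm(2) by simp
      have Seq: "S = {s, m, m'}" using mm(2) S(2) by blast
      obtain a where a: "a < length js" "js ! a = m" using nbr_js nb mm(2) by blast
      obtain b where b: "b < length js" "js ! b = m'" using nbr_js nb mm(2) by blast
      have ab: "a \<noteq> b" using a b mm(1) by blast
      have tri: "Tri a b" using S(1) Seq a b by (simp add: Tri_def)
      define \<alpha> where "\<alpha> = c m"
      define \<beta> where "\<beta> = c m'"
      have ge: "0 \<le> \<alpha>" "0 \<le> \<beta>" using S(3) mm(2) by (auto simp: \<alpha>_def \<beta>_def)
      have znz: "z m \<noteq> 0" "z m' \<noteq> 0" using z_nz nb mm(2) by auto
      have an: "\<alpha> \<noteq> 0"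
      proof
        assume "\<alpha> = 0"
        then have "d = of_real \<beta> * z m'" using dm by (simp add: \<alpha>_def \<beta>_def)
        moreover then have "\<beta> \<noteq> 0" using dnz by auto
        ultimately have "Arg d = Arg (z m')" using ge by simp
        then show False using noarg nb mm(2) by blast
      qed
      have bn: "\<beta> \<noteq> 0"
      proof
        assume "\<beta> = 0"
        then have "d = of_real \<alpha> * z m" using dm by (simp add: \<alpha>_def \<beta>_def)
        moreover then have "\<alpha> \<noteq> 0" using dnz by auto
        ultimately have "Arg d = Arg (z m)" using ge by simp
        then show False using noarg nb mm(2) by blast
      qed
      have apos: "\<alpha> > 0" "\<beta> > 0" using an bn ge by auto
      define X where "X = Re (z m) * Im (z m') - Im (z m) * Re (z m')"
      have dm': "d = of_real \<alpha> * z m + of_real \<beta> * z m'" using dm by (simp add: \<alpha>_def \<beta>_def)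
      have c1: "Re d * Im (z m') - Im d * Re (z m') = \<alpha> * X"
        by (simp add: dm' X_def algebra_simps)
      have c2: "Re (z m) * Im d - Im (z m) * Re d = \<beta> * X"
        by (simp add: dm' X_def algebra_simps)
      have Xp: "X = cmod (z m) * cmod (z m') * sin (Th b - Th a)"
        using cross_polar[OF znz] a b by (simp add: X_def Th_def)
      have c1p: "cmod d * cmod (z m') * sin (Th b - \<phi>) = \<alpha> * X"
        using cross_polar[OF dnz znz(2)] c1 Ad b by (simp add: Th_def)
      have c2p: "cmod (z m) * cmod d * sin (\<phi> - Th a) = \<beta> * X"
        using cross_polar[OF znz(1) dnz] c2 Ad a by (simp add: Th_def)
      have sT: "sin (Th b - Th a) \<noteq> 0" using Tri_I tri a b ab by blast
      have k1: "(cmod d * cmod (z m')) * (sin (Th b - \<phi>) * sin (Th b - Th a))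
          = \<alpha> * (cmod (z m) * cmod (z m')) * (sin (Th b - Th a) * sin (Th b - Th a))"
      proof -
        have "(cmod d * cmod (z m')) * (sin (Th b - \<phi>) * sin (Th b - Th a))
            = (cmod d * cmod (z m') * sin (Th b - \<phi>)) * sin (Th b - Th a)" by (simp only: mult_ac)
        also have "\<dots> = \<alpha> * X * sin (Th b - Th a)" by (simp only: c1p)
        also have "\<dots> = \<alpha> * (cmod (z m) * cmod (z m')) * (sin (Th b - Th a) * sin (Th b - Th a))"
          by (simp only: Xp mult_ac)
        finally show ?thesis .
      qed
      have k2: "(cmod (z m) * cmod d) * (sin (\<phi> - Th a) * sin (Th b - Th a))
          = \<beta> * (cmod (z m) * cmod (z m')) * (sin (Th b - Th a) * sin (Th b - Th a))"
      proof -
        have "(cmod (z m) * cmod d) * (sin (\<phi> - Th a) * sin (Th b - Th a))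
            = (cmod (z m) * cmod d * sin (\<phi> - Th a)) * sin (Th b - Th a)" by (simp only: mult_ac)
        also have "\<dots> = \<beta> * X * sin (Th b - Th a)" by (simp only: c2p)
        also have "\<dots> = \<beta> * (cmod (z m) * cmod (z m')) * (sin (Th b - Th a) * sin (Th b - Th a))"
          by (simp only: Xp mult_ac)
        finally show ?thesis .
      qed
      have sq: "0 < sin (Th b - Th a) * sin (Th b - Th a)"
        using sT by (auto simp: zero_less_mult_iff linorder_neq_iff)
      have nn: "0 < cmod (z m) * cmod (z m')" using znz by simp
      have pos1: "0 < \<alpha> * (cmod (z m) * cmod (z m')) * (sin (Th b - Th a) * sin (Th b - Th a))"
        by (rule mult_pos_pos[OF mult_pos_pos[OF apos(1) nn] sq])
      have pos2: "0 < \<beta> * (cmod (z m) * cmod (z m')) * (sin (Th b - Th a) * sin (Th b - Th a))"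
        by (rule mult_pos_pos[OF mult_pos_pos[OF apos(2) nn] sq])
      have q1: "0 < sin (Th b - \<phi>) * sin (Th b - Th a)"
      proof -
        have "0 < (cmod d * cmod (z m')) * (sin (Th b - \<phi>) * sin (Th b - Th a))" unfolding k1 by (rule pos1)
        moreover have "0 < cmod d * cmod (z m')" using dnz znz by simp
        ultimately show ?thesis by (rule zero_less_mult_pos)
      qed
      have q2: "0 < sin (\<phi> - Th a) * sin (Th b - Th a)"
      proof -
        have "0 < (cmod (z m) * cmod d) * (sin (\<phi> - Th a) * sin (Th b - Th a))" unfolding k2 by (rule pos2)
        moreover have "0 < cmod (z m) * cmod d" using dnz znz by simp
        ultimately show ?thesis by (rule zero_less_mult_pos)
      qed
      have ?thesis using a b ab tri q1 q2 unfolding insec_def by blast }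
    ultimately show ?thesis using cases by blast
  qed
qed

end


context star
begin

abbreviation "l \<equiv> length js"

lemma F1:
  assumes "Tri a b" "a < b" "b < l"
  shows "b = Suc a \<or> (a = 0 \<and> b = l - 1)"
proof (rule ccontr)
  assume nc: "\<not> (b = Suc a \<or> (a = 0 \<and> b = l - 1))"
  have ab: "a \<noteq> b" "a < l" using assms by auto
  have dec: "Th b < Th a" using Th_dec assms by blast
  have sT: "sin (Th b - Th a) \<noteq> 0" using Tri_I[OF assms(1) ab(2) assms(3) ab(1)] .
  have npi: "Th a - Th b \<noteq> pi"
  proof
    assume "Th a - Th b = pi" then have "Th b - Th a = - pi" by simp
    then show False using sT by simp
  qed
  consider "Th a - Th b < pi" | "Th a - Th b > pi" using npi by linarith
  then show False
  proof cases
    case 1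
    define c where "c = Suc a"
    have c: "a < c" "c < b" using nc assms(2) by (auto simp: c_def)
    have "Th c < Th a" "Th b < Th c" using Th_dec c assms(3) by auto
    then have "insec0 (Th a) (Th b) (Th c)" unfolding insec0_def
      using F1_short[of "Th b" "Th c" "Th a"] 1 Th_bnd by auto
    then show False using Tri_E[OF assms(1) ab(2) assms(3), of c] c assms by auto
  next
    case 2
    obtain c where c: "c < l" "c < a \<or> b < c"
    proof (cases "a = 0")
      case True then have "b < l - 1" using nc assms by auto
      then show ?thesis using that[of "l - 1"] by auto
    next
      case False show ?thesis by (rule that[of 0]) (use False assms in auto)
    qed
    have "Th a < Th c \<or> Th c < Th b" using c Th_dec assms by auto
    then have "insec0 (Th a) (Th b) (Th c)" unfolding insec0_def
      using F1_long[of "Th b" "Th a" "Th c"] 2 dec Th_bnd by auto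
    then show False using Tri_E[OF assms(1) ab(2) assms(3), of c] c assms by auto
  qed
qed

lemma gap_conclude:
  assumes "Tri p q" "p < l" "q < l" "p \<noteq> q" "x < l" "Th x = Th p \<or> Th x = Th q \<or> insec (Th p) (Th q) (Th x)"
  shows "x = p \<or> x = q"
proof (rule ccontr)
  assume "\<not> (x = p \<or> x = q)"
  then have "\<not> insec0 (Th p) (Th q) (Th x)" using Tri_E assms by auto
  moreover have "Th x \<noteq> Th p" "Th x \<noteq> Th q" using Th_inj assms \<open>\<not> (x = p \<or> x = q)\<close> by metis+
  ultimately show False using assms(6) insec_insec0 by blast
qed

lemma Tri_eq: "{p, q} = {a, b} \<Longrightarrow> Tri p q \<Longrightarrow> Tri a b"
  unfolding Tri_def by (metis doubleton_eq_iff insert_commute)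

lemma F2_internal:
  assumes "Suc a < l"
  shows "Tri a (Suc a)"
proof -
  define \<phi> where "\<phi> = (Th a + Th (Suc a)) / 2"
  have lt: "Th (Suc a) < Th a" using Th_dec assms by auto
  have ph: "Th (Suc a) < \<phi>" "\<phi> < Th a" using lt by (auto simp: \<phi>_def)
  have out: "Th c \<le> Th (Suc a) \<or> Th a \<le> Th c" if "c < l" for c
  proof (cases "c \<le> a")
    case True then show ?thesis using Th_mono[of c a] assms by auto
  next
    case False then have "Suc a \<le> c" by simp
    then show ?thesis using Th_mono that by auto
  qed
  have "\<And>c. c < l \<Longrightarrow> \<phi> \<noteq> Th c" using out ph by force
  moreover have "-pi < \<phi>" "\<phi> \<le> pi" using Th_bnd[of a] Th_bnd[of "Suc a"] by (auto simp: \<phi>_def)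
  ultimately obtain p q where pq: "p < l" "q < l" "p \<noteq> q" "Tri p q" "insec (Th p) (Th q) \<phi>"
    using Tri_C by blast
  have g: "(Th a = Th p \<or> Th a = Th q \<or> insec (Th p) (Th q) (Th a)) \<and>
        (Th (Suc a) = Th p \<or> Th (Suc a) = Th q \<or> insec (Th p) (Th q) (Th (Suc a)))"
    by (rule gap_internal) (use Th_bnd ph out pq in auto)
  have "a = p \<or> a = q" by (rule gap_conclude[OF pq(4,1,2,3)]) (use g assms in auto)
  moreover have "Suc a = p \<or> Suc a = q" by (rule gap_conclude[OF pq(4,1,2,3)]) (use g assms in auto)
  ultimately have "{p, q} = {a, Suc a}" using pq(3) by auto
  then show ?thesis using Tri_eq pq(4) by blast
qed

lemma F2_wrap:
  assumes "2 \<le> l"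
  shows "Tri 0 (l - 1)"
proof -
  define \<phi> where "\<phi> = (Th (l - 1) - pi) / 2"
  have ph: "-pi < \<phi>" "\<phi> < Th (l - 1)" using Th_bnd[of "l - 1"] by (auto simp: \<phi>_def)
  have inr: "Th (l - 1) \<le> Th c \<and> Th c \<le> Th 0" if "c < l" for c
    using Th_mono that by auto
  have "\<And>c. c < l \<Longrightarrow> \<phi> \<noteq> Th c" using inr ph by force
  moreover have "\<phi> \<le> pi" using ph Th_bnd[of "l - 1"] by linarith
  ultimately obtain p q where pq: "p < l" "q < l" "p \<noteq> q" "Tri p q" "insec (Th p) (Th q) \<phi>"
    using Tri_C ph by blast
  have g: "(Th 0 = Th p \<or> Th 0 = Th q \<or> insec (Th p) (Th q) (Th 0)) \<and>
        (Th (l - 1) = Th p \<or> Th (l - 1) = Th q \<or> insec (Th p) (Th q) (Th (l - 1)))"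
    by (rule gap_wrap) (use Th_bnd ph inr pq in auto)
  have "0 = p \<or> 0 = q" by (rule gap_conclude[OF pq(4,1,2,3)]) (use g assms in auto)
  moreover have "l - 1 = p \<or> l - 1 = q" by (rule gap_conclude[OF pq(4,1,2,3)]) (use g assms in auto)
  ultimately have "{p, q} = {0, l - 1}" using pq(1-3) by auto
  then show ?thesis using Tri_eq pq(4) by blast
qed

lemma l_ge3: "3 \<le> l"
proof (rule ccontr)
  assume "\<not> 3 \<le> l"
  then have l3: "l \<le> 2" by simp
  show False
  proof (cases "l = 0")
    case True
    have "\<exists>a<l. \<exists>b<l. a \<noteq> b \<and> Tri a b \<and> insec (Th a) (Th b) 0"
      by (rule Tri_C) (use True in auto)
    then show False using True by auto
  next
    case False
    define \<phi>2 where "\<phi>2 = (Th (l - 1) - pi) / 2"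
    have ph2: "-pi < \<phi>2" "\<phi>2 < Th (l - 1)" using Th_bnd[of "l - 1"] by (auto simp: \<phi>2_def)
    have inr: "Th (l - 1) \<le> Th c" if "c < l" for c using Th_mono that by auto
    have "\<And>c. c < l \<Longrightarrow> \<phi>2 \<noteq> Th c" using inr ph2 by force
    moreover have "\<phi>2 \<le> pi" using ph2 Th_bnd[of "l - 1"] by linarith
    ultimately obtain p q where pq: "p < l" "q < l" "p \<noteq> q" "Tri p q" "insec (Th p) (Th q) \<phi>2"
      using Tri_C ph2 by blast
    then have l2: "l = 2" using l3 by auto
    have pq01: "p = 0 \<and> q = 1 \<or> p = 1 \<and> q = 0" using pq l2 by auto
    define \<phi>1 where "\<phi>1 = (Th 0 + Th 1) / 2"
    have lt: "Th 1 < Th 0" using Th_dec l2 by auto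
    have ph1: "Th 1 < \<phi>1" "\<phi>1 < Th 0" using lt by (auto simp: \<phi>1_def)
    have "\<And>c. c < l \<Longrightarrow> \<phi>1 \<noteq> Th c" using ph1 l2 by (auto simp: less_2_cases_iff)
    moreover have "-pi < \<phi>1" "\<phi>1 \<le> pi" using Th_bnd[of 0] Th_bnd[of 1] by (auto simp: \<phi>1_def)
    ultimately obtain p' q' where pq': "p' < l" "q' < l" "p' \<noteq> q'" "insec (Th p') (Th q') \<phi>1"
      using Tri_C by blast
    have pq01': "p' = 0 \<and> q' = 1 \<or> p' = 1 \<and> q' = 0" using pq' l2 by auto
    have s1: "insec (Th 0) (Th 1) \<phi>1" using pq01' pq'(4) insec_sym by auto
    have s2: "insec (Th 0) (Th 1) \<phi>2" using pq01 pq(5) insec_sym by auto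
    show False
      by (rule two_sectors[of "Th 0" "Th 1" "Th 0" "Th 1" \<phi>1 \<phi>2]) (use Th_bnd ph1 ph2 s1 s2 l2 in auto)
  qed
qed

end


definition dl :: "'n set \<Rightarrow> 'n set \<Rightarrow> complex" where "dl \<tau> \<sigma> = (if \<sigma> = \<tau> then 1 else 0)"

lemma sum_dl: "(\<Sum>\<sigma>\<in>(UNIV :: 'n::finite set set). dl \<tau> \<sigma> * f \<sigma>) = f \<tau>"
proof -
  have "(\<Sum>\<sigma>\<in>(UNIV :: 'n set set). dl \<tau> \<sigma> * f \<sigma>) = (\<Sum>\<sigma>\<in>UNIV. if \<sigma> = \<tau> then f \<sigma> else 0)"
    by (rule sum.cong) (auto simp: dl_def)
  then show ?thesis by simp
qed

lemma sum_dl_single: "(\<Sum>x\<in>(UNIV :: 'n::finite set). dl {a} {x}) = 1"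
proof -
  have "(\<Sum>x\<in>(UNIV :: 'n set). dl {a} {x}) = (\<Sum>x\<in>UNIV. if x = a then 1 else 0)"
    by (rule sum.cong) (auto simp: dl_def)
  then show ?thesis by simp
qed

lemma bdry1_pair:
  fixes x y :: "'n::{finite,linorder}"
  shows "bdry (Suc 0) (\<lambda>\<sigma>. dl {x} \<sigma> - dl {y} \<sigma>) = (\<lambda>_. 0::complex)"
proof
  fix \<tau> :: "'n set"
  show "bdry (Suc 0) (\<lambda>\<sigma>. dl {x} \<sigma> - dl {y} \<sigma>) \<tau> = 0"
  proof (cases "card \<tau> = 0")
    case True
    then have t: "\<tau> = {}" by simp
    have "bdry (Suc 0) (\<lambda>\<sigma>. dl {x} \<sigma> - dl {y} \<sigma>) \<tau> = (\<Sum>z\<in>UNIV. dl {x} {z} - dl {y} {z})"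
      by (simp add: bdry_def t)
    also have "\<dots> = 0" by (simp add: sum_subtractf sum_dl_single)
    finally show ?thesis .
  qed (simp add: bdry_def)
qed

lemma caseA_empty:
  assumes "{} \<in> F"
  shows "red_hom_nonzero {J. J \<subseteq> {} \<and> J \<in> F} (0::nat)"
proof (rule red_hom_nonzeroI[where c = "dl {}" and w = "dl {}"])
  show "is_chain {J. J \<subseteq> {} \<and> J \<in> F} 0 (dl {})"
    using assms by (auto simp: is_chain_def dl_def)
  show "bdry 0 (dl ({} :: 'a::{finite,linorder} set)) = (\<lambda>_. 0)" by (simp add: bdry_def)
  show "cob (dl {}) \<tau> = 0" if "\<tau> \<in> {J. J \<subseteq> {} \<and> J \<in> F}" "card \<tau> = Suc 0" for \<tau> :: "'a set"
    using that by auto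
  show "(\<Sum>\<sigma>\<in>UNIV. dl ({} :: 'a set) \<sigma> * dl {} \<sigma>) \<noteq> (0::complex)" by (subst sum_dl) (simp add: dl_def)
qed

lemma caseA:
  fixes s :: "'n::{finite,linorder}"
  assumes "\<forall>i. {i} \<in> F" "s \<notin> P" "p \<in> P" "\<forall>x\<in>P. {s, x} \<notin> F"
  shows "red_hom_nonzero {J. J \<subseteq> insert s P \<and> J \<in> F} (Suc 0)"
proof (rule red_hom_nonzeroI[where c = "\<lambda>\<sigma>. dl {s} \<sigma> - dl {p} \<sigma>" and w = "dl {s}"])
  have sp: "s \<noteq> p" using assms by auto
  show "is_chain {J. J \<subseteq> insert s P \<and> J \<in> F} (Suc 0) (\<lambda>\<sigma>. dl {s} \<sigma> - dl {p} \<sigma>)"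
    unfolding is_chain_def using assms by (auto simp: dl_def split: if_splits)
  show "bdry (Suc 0) (\<lambda>\<sigma>. dl {s} \<sigma> - dl {p} \<sigma>) = (\<lambda>_. 0)" by (rule bdry1_pair)
  show "cob (dl {s}) \<tau> = 0" if t: "\<tau> \<in> {J. J \<subseteq> insert s P \<and> J \<in> F}" "card \<tau> = Suc (Suc 0)" for \<tau>
    unfolding cob_def
  proof (rule sum.neutral, intro ballI)
    fix x assume x: "x \<in> \<tau>"
    have "\<tau> - {x} \<noteq> {s}"
    proof
      assume e: "\<tau> - {x} = {s}"
      then have te: "\<tau> = {s, x}" using x by auto
      then have "x \<noteq> s" using t(2) by (metis card_1_singleton_iff insert_absorb2 numeral_2_eq_2 n_not_Suc_n)
      then have "x \<in> P" using t te by auto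
      then show False using assms(4) t te by auto
    qed
    then show "(-1) ^ card {u \<in> \<tau> - {x}. u < x} * dl {s} (\<tau> - {x}) = 0" by (simp add: dl_def)
  qed
  show "(\<Sum>\<sigma>\<in>UNIV. dl {s} \<sigma> * (dl {s} \<sigma> - dl {p} \<sigma>)) \<noteq> 0"
    using sp by (subst sum_dl) (simp add: dl_def)
qed



definition oe :: "'n::linorder \<Rightarrow> 'n \<Rightarrow> 'n set \<Rightarrow> complex" where
  "oe a b \<sigma> = (if \<sigma> = {a, b} then (if a < b then 1 else -1) else 0)"

lemma card_filter_single: "card {u \<in> {x}. u < y} = (if x < y then 1 else 0)"
proof -
  have "{u \<in> {x}. u < y} = (if x < y then {x} else {})" by auto
  then show ?thesis by simp
qed

lemma bdry_oe:
  fixes a b :: "'n::{finite,linorder}"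
  assumes ab: "a \<noteq> b"
  shows "bdry 2 (oe a b) = (\<lambda>\<tau>. dl {b} \<tau> - dl {a} \<tau>)"
proof
  fix \<tau> :: "'n set"
  show "bdry 2 (oe a b) \<tau> = dl {b} \<tau> - dl {a} \<tau>"
  proof (cases "card \<tau> = 1")
    case False
    have "\<tau> \<noteq> {b}" "\<tau> \<noteq> {a}" using False by auto
    then show ?thesis using False by (simp add: bdry_def dl_def)
  next
    case True
    then obtain x where x: "\<tau> = {x}" by (auto simp: card_1_singleton_iff)
    have tm: "(-1) ^ card {u \<in> {x}. u < y} * oe a b (insert y {x})
        = (if x = a \<and> y = b then -1 else 0) + (if x = b \<and> y = a then 1 else 0)" if y: "y \<noteq> x" for y
    proof -
      have iff: "insert y {x} = {a, b} \<longleftrightarrow> (x = a \<and> y = b) \<or> (x = b \<and> y = a)"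
        using y ab by (auto simp: doubleton_eq_iff insert_commute)
      show ?thesis
      proof (cases "(x = a \<and> y = b) \<or> (x = b \<and> y = a)")
        case True
        then show ?thesis
        proof
          assume h: "x = a \<and> y = b"
          then have "insert y {x} = {a, b}" by auto
          then show ?thesis using h ab by (simp only: card_filter_single) (auto simp: oe_def)
        next
          assume h: "x = b \<and> y = a"
          then have "insert y {x} = {a, b}" by auto
          then show ?thesis using h ab by (simp only: card_filter_single) (auto simp: oe_def)
        qed
      next
        case False
        then have "insert y {x} \<noteq> {a, b}" using iff by blast
        then have o0: "oe a b (insert y {x}) = 0" unfolding oe_def by (rule if_not_P)
        have r0: "(if x = a \<and> y = b then -1 else 0) + (if x = b \<and> y = a then 1 else 0) = (0::complex)"
        proof -
          have h1: "\<not> (x = a \<and> y = b)" and h2: "\<not> (x = b \<and> y = a)" using False by auto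
          show ?thesis by (simp only: if_not_P[OF h1] if_not_P[OF h2] add_0)
        qed
        show ?thesis by (simp only: o0 r0 mult_zero_right)
      qed
    qed
    have "bdry 2 (oe a b) \<tau> = (\<Sum>y\<in>UNIV - {x}. (-1) ^ card {u \<in> {x}. u < y} * oe a b (insert y {x}))"
      by (simp add: bdry_def x)
    also have "\<dots> = (\<Sum>y\<in>UNIV - {x}. (if x = a \<and> y = b then -1 else 0) + (if x = b \<and> y = a then 1 else 0))"
      by (rule sum.cong[OF refl], rule tm) simp
    also have "\<dots> = (\<Sum>y\<in>UNIV - {x}. if x = a \<and> y = b then -1 else 0) + (\<Sum>y\<in>UNIV - {x}. if x = b \<and> y = a then 1 else 0)"
      by (rule sum.distrib)
    also have "(\<Sum>y\<in>UNIV - {x}. if x = a \<and> y = b then -1 else 0) = (if x = a then -1 else (0::complex))"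
    proof (cases "x = a")
      case True
      then have "(\<Sum>y\<in>UNIV - {x}. if x = a \<and> y = b then -1 else 0) = (\<Sum>y\<in>UNIV - {x}. if y = b then -1 else (0::complex))"
        by simp
      also have "\<dots> = -1" using True ab by (simp add: sum.delta)
      finally show ?thesis using True by simp
    qed simp
    also have "(\<Sum>y\<in>UNIV - {x}. if x = b \<and> y = a then 1 else 0) = (if x = b then 1 else (0::complex))"
    proof (cases "x = b")
      case True
      then have "(\<Sum>y\<in>UNIV - {x}. if x = b \<and> y = a then 1 else 0) = (\<Sum>y\<in>UNIV - {x}. if y = a then 1 else (0::complex))"
        by simp
      also have "\<dots> = 1" using True ab by (simp add: sum.delta)
      finally show ?thesis using True by simp
    qed simp
    finally show ?thesis by (auto simp: x dl_def)
  qed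
qed

lemma sum_shift_mod:
  fixes f :: "nat \<Rightarrow> 'a::comm_monoid_add"
  assumes "0 < l"
  shows "(\<Sum>k<l. f (Suc k mod l)) = (\<Sum>k<l. f k)"
proof -
  obtain m where m: "l = Suc m" using assms by (cases l) auto
  have "(\<Sum>k<Suc m. f (Suc k mod Suc m)) = (\<Sum>k<m. f (Suc k mod Suc m)) + f (Suc m mod Suc m)"
    by (rule sum.lessThan_Suc)
  also have "(\<Sum>k<m. f (Suc k mod Suc m)) = (\<Sum>k<m. f (Suc k))"
    by (rule sum.cong) auto
  also have "f (Suc m mod Suc m) = f 0" by simp
  also have "(\<Sum>k<m. f (Suc k)) + f 0 = (\<Sum>k<Suc m. f k)"
    by (subst sum.lessThan_Suc_shift) (simp add: add.commute)
  finally show ?thesis using m by simp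
qed

context star
begin

definition z1 :: "'n set \<Rightarrow> complex" where
  "z1 \<sigma> = (\<Sum>k<l. oe (js ! k) (js ! (Suc k mod l)) \<sigma>)"

lemma l_pos: "0 < l" using l_ge3 by linarith

lemma next_ne: "k < l \<Longrightarrow> js ! k \<noteq> js ! (Suc k mod l)"
proof
  assume k: "k < l" "js ! k = js ! (Suc k mod l)"
  then have "k = Suc k mod l" using js_inj l_pos by (metis mod_less_divisor)
  show False
  proof (cases "Suc k < l")
    case True then show False using \<open>k = Suc k mod l\<close> by simp
  next
    case False then have "Suc k = l" using k(1) by simp
    then have "k = 0" using \<open>k = Suc k mod l\<close> by simp
    then show False using \<open>Suc k = l\<close> l_ge3 by simp
  qed
qed

lemma Tri_next: "k < l \<Longrightarrow> Tri k (Suc k mod l)"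
proof (cases "Suc k < l")
  case True then show ?thesis using F2_internal by simp
next
  case False
  assume "k < l"
  then have "Suc k = l" using False by simp
  then have "k = l - 1" "Suc k mod l = 0" by auto
  then show ?thesis using F2_wrap l_ge3 Tri_sym by auto
qed

lemma z1_cycle: "bdry 2 z1 = (\<lambda>_. 0)"
proof -
  have "bdry 2 z1 = (\<lambda>\<tau>. \<Sum>k<l. bdry 2 (oe (js ! k) (js ! (Suc k mod l))) \<tau>)"
    unfolding z1_def by (rule bdry_sum)
  also have "\<dots> = (\<lambda>\<tau>. \<Sum>k<l. dl {js ! (Suc k mod l)} \<tau> - dl {js ! k} \<tau>)"
    by (rule ext, rule sum.cong) (auto simp: bdry_oe next_ne)
  also have "\<dots> = (\<lambda>_. 0)"
  proof
    fix \<tau>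
    show "(\<Sum>k<l. dl {js ! (Suc k mod l)} \<tau> - dl {js ! k} \<tau>) = 0"
      using sum_shift_mod[OF l_pos, of "\<lambda>k. dl {js ! k} \<tau>"] by (simp add: sum_subtractf)
  qed
  finally show ?thesis .
qed

lemma z1_supp: "z1 \<sigma> \<noteq> 0 \<Longrightarrow> \<exists>k<l. \<sigma> = {js ! k, js ! (Suc k mod l)}"
proof (rule ccontr)
  assume "z1 \<sigma> \<noteq> 0" "\<not> (\<exists>k<l. \<sigma> = {js ! k, js ! (Suc k mod l)})"
  then have "z1 \<sigma> = 0" unfolding z1_def by (intro sum.neutral) (auto simp: oe_def)
  then show False using \<open>z1 \<sigma> \<noteq> 0\<close> by simp
qed

lemma z1_01: "z1 {js ! 0, js ! 1} \<noteq> 0"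
proof -
  have l3: "3 \<le> l" by (rule l_ge3)
  have "z1 {js ! 0, js ! 1} = (\<Sum>k<l. if k = 0 then oe (js ! 0) (js ! 1) {js ! 0, js ! 1} else 0)"
    unfolding z1_def
  proof (rule sum.cong[OF refl])
    fix k assume k: "k \<in> {..<l}"
    show "oe (js ! k) (js ! (Suc k mod l)) {js ! 0, js ! 1} = (if k = 0 then oe (js ! 0) (js ! 1) {js ! 0, js ! 1} else 0)"
    proof (cases "k = 0")
      case True then show ?thesis using l3 by simp
    next
      case False
      have "{js ! 0, js ! 1} \<noteq> {js ! k, js ! (Suc k mod l)}"
      proof
        assume e: "{js ! 0, js ! 1} = {js ! k, js ! (Suc k mod l)}"
        have kl: "k < l" "Suc k mod l < l" using k l_pos by auto
        have "js ! k = js ! 0 \<or> js ! k = js ! 1" using e by auto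
        then show False
        proof
          assume "js ! k = js ! 0" then have "k = 0" using js_inj[of k 0] kl l_pos by blast
          then show False using False by simp
        next
          assume "js ! k = js ! 1" then have k1: "k = 1" using js_inj[of k 1] kl l3 by simp
          then have "js ! (Suc k mod l) = js ! 0" using e next_ne[OF kl(1)] by (auto simp: doubleton_eq_iff)
          then have "Suc k mod l = 0" using js_inj[of "Suc k mod l" 0] kl l_pos by blast
          then show False using k1 l3 by simp
        qed
      qed
      then show ?thesis using False by (simp add: oe_def)
    qed
  qed
  also have "\<dots> = oe (js ! 0) (js ! 1) {js ! 0, js ! 1}" using l_pos by simp
  finally show ?thesis by (simp add: oe_def)
qed

end


lemma not_rhn_bdry:
  assumes "\<not> red_hom_nonzero K d" "is_chain K d c" "bdry d c = (\<lambda>_. 0)"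
  shows "\<exists>b. is_chain K (Suc d) b \<and> bdry (Suc d) b = c"
  using assms unfolding red_hom_nonzero_def by blast

context star
begin

lemma edge_F: "k < l \<Longrightarrow> {s, js ! k, js ! (Suc k mod l)} \<in> F"
  using Tri_next unfolding Tri_def by blast

lemma caseB:
  assumes allP: "\<forall>k<l. js ! k \<in> P" and sP: "s \<notin> P"
    and nh: "\<not> red_hom_nonzero {J. J \<subseteq> P \<and> J \<in> F} 2"
  shows "red_hom_nonzero {J. J \<subseteq> insert s P \<and> J \<in> F} 3"
proof -
  let ?K1 = "{J. J \<subseteq> P \<and> J \<in> F}"
  let ?K2 = "{J. J \<subseteq> insert s P \<and> J \<in> F}"
  have smod: "Suc k mod l < l" for k using l_pos by simp
  have ch1: "is_chain ?K1 2 z1"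
    unfolding is_chain_def
  proof (intro allI impI)
    fix \<sigma> assume "z1 \<sigma> \<noteq> 0"
    then obtain k where k: "k < l" "\<sigma> = {js ! k, js ! (Suc k mod l)}" using z1_supp by blast
    have "\<sigma> \<subseteq> {s, js ! k, js ! (Suc k mod l)}" using k by auto
    then have "\<sigma> \<in> F" using csf_parts(2)[OF csf edge_F[OF k(1)]] by blast
    moreover have "\<sigma> \<subseteq> P" using k allP smod by auto
    moreover have "card \<sigma> = 2" using k next_ne by auto
    ultimately show "\<sigma> \<in> ?K1 \<and> card \<sigma> = 2" by auto
  qed
  obtain b where b: "is_chain ?K1 3 b" "bdry 3 b = z1"
    using not_rhn_bdry[OF nh ch1 z1_cycle] by (auto simp: numeral_3_eq_3 numeral_2_eq_2)
  have supp: "\<And>\<sigma>. z1 \<sigma> \<noteq> 0 \<Longrightarrow> s \<notin> \<sigma> \<and> card \<sigma> = 2"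
    using ch1 sP unfolding is_chain_def by blast
  have bc: "bdry (Suc 2) (conez s z1) = (\<lambda>\<tau>. z1 \<tau> - conez s (bdry 2 z1) \<tau>)"
    by (rule bdry_conez) (use supp in blast)
  have bc3: "bdry 3 (conez s z1) = z1"
    using bc unfolding z1_cycle conez_zero by (simp add: numeral_3_eq_3 numeral_2_eq_2)
  define c2 where "c2 \<sigma> = b \<sigma> - conez s z1 \<sigma>" for \<sigma>
  have cyc: "bdry 3 c2 = (\<lambda>_. 0)"
    unfolding c2_def bdry_diff b(2) bc3 by simp
  have ch2: "is_chain ?K2 3 c2"
    unfolding is_chain_def
  proof (intro allI impI)
    fix \<sigma> assume ne: "c2 \<sigma> \<noteq> 0"
    show "\<sigma> \<in> ?K2 \<and> card \<sigma> = 3"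
    proof (cases "b \<sigma> = 0")
      case False
      then show ?thesis using b(1) unfolding is_chain_def by auto
    next
      case True
      then have cz: "conez s z1 \<sigma> \<noteq> 0" using ne by (simp add: c2_def)
      then have ss: "s \<in> \<sigma>" and zz: "z1 (\<sigma> - {s}) \<noteq> 0" by (auto simp: conez_def split: if_splits)
      obtain k where k: "k < l" "\<sigma> - {s} = {js ! k, js ! (Suc k mod l)}" using z1_supp[OF zz] by blast
      have se: "\<sigma> = {s, js ! k, js ! (Suc k mod l)}" using k(2) ss by blast
      have "\<sigma> \<in> F" using se edge_F[OF k(1)] by simp
      moreover have "\<sigma> \<subseteq> insert s P" using se allP k(1) smod by auto
      moreover have "card \<sigma> = 3"
      proof -
        have "card (\<sigma> - {s}) = 2" using supp[OF zz] by simp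
        moreover have "card \<sigma> = card (\<sigma> - {s}) + 1" using ss
          by (metis card_Diff_singleton card.remove finite add.commute plus_1_eq_Suc)
        ultimately show ?thesis by simp
      qed
      ultimately show ?thesis by simp
    qed
  qed
  define T where "T = {s, js ! 0, js ! 1}"
  have l3: "3 \<le> l" by (rule l_ge3)
  have l01: "0 < l" "1 < l" using l3 by linarith+
  have sj: "js ! 0 \<noteq> s" "js ! 1 \<noteq> s" using js_ne_s[OF l01(1)] js_ne_s[OF l01(2)] by auto
  have Tm: "T - {s} = {js ! 0, js ! 1}" using sj by (auto simp: T_def)
  have bT: "b T = 0"
  proof (rule ccontr)
    assume "b T \<noteq> 0"
    then have "T \<subseteq> P" using b(1) unfolding is_chain_def by auto
    then show False using sP by (auto simp: T_def)
  qed
  have sT: "s \<in> T" by (simp add: T_def)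
  have "conez s z1 T = (-1) ^ card {u \<in> T. u < s} * z1 {js ! 0, js ! 1}"
    unfolding conez_def using sT Tm by simp
  then have cT: "c2 T \<noteq> 0"
    using z1_01 bT by (simp add: c2_def)
  show ?thesis
  proof (rule red_hom_nonzeroI[OF ch2 cyc, where w = "dl T"])
    show "cob (dl T) \<tau> = 0" if "\<tau> \<in> ?K2" "card \<tau> = Suc 3" for \<tau>
      using face_card[OF csf, of \<tau>] that by auto
    show "(\<Sum>\<sigma>\<in>UNIV. dl T \<sigma> * c2 \<sigma>) \<noteq> 0" by (subst sum_dl) (rule cT)
  qed
qed

end


lemma card_filter_pair:
  assumes "a \<noteq> b"
  shows "card {u \<in> {a, b}. u < c} = (if a < c then 1 else 0) + (if b < c then 1 else (0::nat))"
proof -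
  have e: "{u \<in> {a, b}. u < c} = (if a < c then {a} else {}) \<union> (if b < c then {b} else {})" by auto
  show ?thesis unfolding e using assms by auto
qed

lemma sign3:
  fixes s p q :: "'n::linorder"
  assumes "s \<noteq> p" "s \<noteq> q" "p \<noteq> q"
  shows "(-1::complex) ^ card {u \<in> {s, q}. u < p} * (-1) ^ card {u \<in> {s, q}. u < s}
       + (-1) ^ card {u \<in> {s, p}. u < q} * (-1) ^ card {u \<in> {s, p}. u < s} = 0"
  unfolding card_filter_pair[OF assms(2)] card_filter_pair[OF assms(1)]
  using assms
  by (cases rule: linorder_cases[of s p]; cases rule: linorder_cases[of s q]; cases rule: linorder_cases[of p q]) auto

context star
begin

lemma caseC:
  assumes sP: "s \<notin> P"
   and A: "A \<subseteq> {k. k < l \<and> js ! k \<in> P}"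
   and cl: "\<forall>k<l. js ! k \<in> P \<and> js ! (Suc k mod l) \<in> P \<longrightarrow> (k \<in> A \<longleftrightarrow> Suc k mod l \<in> A)"
   and a1: "a1 \<in> A" and a2: "a2 < l" "js ! a2 \<in> P" "a2 \<notin> A"
   and nh: "\<not> red_hom_nonzero {J. J \<subseteq> P \<and> J \<in> F} (Suc 0)"
  shows "red_hom_nonzero {J. J \<subseteq> insert s P \<and> J \<in> F} 2"
proof -
  let ?K1 = "{J. J \<subseteq> P \<and> J \<in> F}"
  let ?K2 = "{J. J \<subseteq> insert s P \<and> J \<in> F}"
  have a1l: "a1 < l" "js ! a1 \<in> P" using a1 A by auto
  define j1 where "j1 = js ! a1"
  define j2 where "j2 = js ! a2"
  have a12: "a1 \<noteq> a2" using a1 a2 by auto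
  have j12: "j1 \<noteq> j2" using js_inj a1l a2 a12 by (auto simp: j1_def j2_def)
  have jP: "j1 \<in> P" "j2 \<in> P" using a1l a2 by (auto simp: j1_def j2_def)
  have js_s: "j1 \<noteq> s" "j2 \<noteq> s" using jP sP by auto
  define c0 where "c0 \<sigma> = dl {j2} \<sigma> - dl {j1} \<sigma>" for \<sigma>
  have c0nz: "c0 \<sigma> \<noteq> 0 \<Longrightarrow> \<sigma> = {j1} \<or> \<sigma> = {j2}" for \<sigma> by (auto simp: c0_def dl_def split: if_splits)
  have ch0: "is_chain ?K1 (Suc 0) c0"
    unfolding is_chain_def using c0nz jP csf_parts(3)[OF csf] by fastforce
  have cy0: "bdry (Suc 0) c0 = (\<lambda>_. 0)" unfolding c0_def by (rule bdry1_pair)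
  obtain b where b: "is_chain ?K1 2 b" "bdry 2 b = c0"
    using not_rhn_bdry[OF nh ch0 cy0] by (auto simp: numeral_2_eq_2)
  have supp0: "\<And>\<sigma>. c0 \<sigma> \<noteq> 0 \<Longrightarrow> s \<notin> \<sigma> \<and> card \<sigma> = Suc 0"
    using c0nz js_s by fastforce
  have bc: "bdry (Suc (Suc 0)) (conez s c0) = (\<lambda>\<tau>. c0 \<tau> - conez s (bdry (Suc 0) c0) \<tau>)"
    by (rule bdry_conez) (use supp0 in blast)
  have bc2: "bdry 2 (conez s c0) = c0"
    using bc unfolding cy0 conez_zero by (simp add: numeral_2_eq_2)
  define c1 where "c1 \<sigma> = b \<sigma> - conez s c0 \<sigma>" for \<sigma>
  have cyc: "bdry 2 c1 = (\<lambda>_. 0)"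
    unfolding c1_def bdry_diff b(2) bc2 by simp
  have bs: "b \<sigma> = 0" if "s \<in> \<sigma>" for \<sigma>
  proof (rule ccontr)
    assume "b \<sigma> \<noteq> 0"
    then have "\<sigma> \<subseteq> P" using b(1) unfolding is_chain_def by auto
    then show False using that sP by auto
  qed
  have nbF: "{s, js ! k} \<in> F" if "k < l" for k using js_nbr[OF that] nbrsD by blast
  have ch1: "is_chain ?K2 2 c1"
    unfolding is_chain_def
  proof (intro allI impI)
    fix \<sigma> assume ne: "c1 \<sigma> \<noteq> 0"
    show "\<sigma> \<in> ?K2 \<and> card \<sigma> = 2"
    proof (cases "b \<sigma> = 0")
      case False
      then show ?thesis using b(1) unfolding is_chain_def by auto
    next
      case True
      then have "conez s c0 \<sigma> \<noteq> 0" using ne by (simp add: c1_def)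
      then have ss: "s \<in> \<sigma>" and cc: "c0 (\<sigma> - {s}) \<noteq> 0" by (auto simp: conez_def split: if_splits)
      then have "\<sigma> - {s} = {j1} \<or> \<sigma> - {s} = {j2}" using c0nz by blast
      then have se: "\<sigma> = {s, j1} \<or> \<sigma> = {s, j2}" using ss by blast
      have "{s, j1} \<in> F" "{s, j2} \<in> F" using nbF a1l a2 by (auto simp: j1_def j2_def)
      then show ?thesis using se jP js_s by auto
    qed
  qed
  define w where "w \<sigma> = (if s \<in> \<sigma> \<and> (\<exists>k\<in>A. \<sigma> - {s} = {js ! k}) then (-1) ^ card {u \<in> \<sigma>. u < s} else (0::complex))" for \<sigma>
  define T1 where "T1 = {s, j1}"
  have wc: "w \<sigma> * c1 \<sigma> = dl T1 \<sigma>" for \<sigma>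
  proof (cases "s \<in> \<sigma> \<and> (\<exists>k\<in>A. \<sigma> - {s} = {js ! k})")
    case False
    then have "w \<sigma> = 0" by (simp add: w_def)
    moreover have "\<sigma> \<noteq> T1"
    proof
      assume "\<sigma> = T1"
      then have "s \<in> \<sigma> \<and> \<sigma> - {s} = {js ! a1}" using js_s by (auto simp: T1_def j1_def)
      then show False using False a1 by blast
    qed
    ultimately show ?thesis by (simp add: dl_def)
  next
    case True
    then obtain k where k: "k \<in> A" "\<sigma> - {s} = {js ! k}" and ss: "s \<in> \<sigma>" by blast
    have kl: "k < l" using k A by auto
    have wv: "w \<sigma> = (-1) ^ card {u \<in> \<sigma>. u < s}" using True by (simp add: w_def)
    have k2: "js ! k \<noteq> j2"
    proof
      assume "js ! k = j2" then have "k = a2" using js_inj kl a2 by (auto simp: j2_def)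
      then show False using k a2 by simp
    qed
    have c0v: "c0 {js ! k} = (if js ! k = j1 then -1 else 0)" using k2 by (simp add: c0_def dl_def)
    have c1v: "c1 \<sigma> = - ((-1) ^ card {u \<in> \<sigma>. u < s} * c0 {js ! k})"
      using bs[OF ss] k ss by (simp add: c1_def conez_def)
    have sig: "\<sigma> = {s, js ! k}" using k(2) ss by blast
    have jks: "js ! k \<noteq> s" using js_ne_s kl by blast
    have eqT: "\<sigma> = T1 \<longleftrightarrow> js ! k = j1"
      using sig jks js_s by (auto simp: T1_def doubleton_eq_iff)
    have sq: "((-1::complex) ^ card {u \<in> \<sigma>. u < s}) * (-1) ^ card {u \<in> \<sigma>. u < s} = 1"
      by (simp add: power_add[symmetric] mult_2[symmetric] power_mult)
    show ?thesis
    proof (cases "js ! k = j1")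
      case True
      have "w \<sigma> * c1 \<sigma> = ((-1::complex) ^ card {u \<in> \<sigma>. u < s}) * (-1) ^ card {u \<in> \<sigma>. u < s}"
      proof -
        have "c0 {j1} = -1" using j12 by (simp add: c0_def dl_def)
        then show ?thesis using True by (simp add: wv c1v)
      qed
      then show ?thesis using sq eqT True by (simp add: dl_def)
    next
      case False
      then show ?thesis using eqT by (simp add: wv c1v c0v dl_def)
    qed
  qed
  have sum1: "(\<Sum>\<sigma>\<in>UNIV. w \<sigma> * c1 \<sigma>) \<noteq> 0"
  proof -
    have "(\<Sum>\<sigma>\<in>UNIV. w \<sigma> * c1 \<sigma>) = (\<Sum>\<sigma>\<in>UNIV. dl T1 \<sigma> * 1)" by (simp add: wc)
    also have "\<dots> = 1" by (rule sum_dl)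
    finally show ?thesis by simp
  qed
  show ?thesis
  proof (rule red_hom_nonzeroI[OF ch1 cyc _ sum1])
    fix \<tau> assume t: "\<tau> \<in> ?K2" "card \<tau> = Suc 2"
    show "cob w \<tau> = 0"
    proof (cases "s \<in> \<tau>")
      case False
      show ?thesis unfolding cob_def
        by (rule sum.neutral) (use False in \<open>auto simp: w_def\<close>)
    next
      case True
      have c2: "card (\<tau> - {s}) = 2" using t True by (simp add: card_Diff_singleton)
      then obtain p q where pq: "p \<noteq> q" "\<tau> - {s} = {p, q}" by (auto simp: card_2_iff)
      have tau: "\<tau> = {s, p, q}" using pq True by blast
      have ps: "p \<noteq> s" "q \<noteq> s" using pq by auto
      have pqP: "p \<in> P" "q \<in> P" using t tau ps by auto
      have tF: "\<tau> \<in> F" using t by simp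
      have "{s, p} \<in> F" "{s, q} \<in> F" using csf_parts(2)[OF csf tF] tau by auto
      then have "p \<in> nbrs F s" "q \<in> nbrs F s" using ps by (auto simp: nbrs_def)
      then obtain a bb where ab: "a < l" "js ! a = p" "bb < l" "js ! bb = q" using nbr_js by metis
      have abne: "a \<noteq> bb" using ab pq by auto
      have tri: "Tri a bb" using tF tau ab by (simp add: Tri_def)
      have eqA: "a \<in> A \<longleftrightarrow> bb \<in> A"
      proof -
        have gen: "x \<in> A \<longleftrightarrow> y \<in> A" if "Tri x y" "x < y" "y < l" "js ! x \<in> P" "js ! y \<in> P" for x y
        proof -
          have "y = Suc x \<or> (x = 0 \<and> y = l - 1)" using F1 that by blast
          then show ?thesis
          proof
            assume "y = Suc x"
            then have m: "Suc x mod l = y" using that(3) by simp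
            have "x < l" using that by simp
            then show ?thesis using cl[rule_format, of x] m that(4,5) by simp
          next
            assume h: "x = 0 \<and> y = l - 1"
            then have "Suc y = l" using that by simp
            then have "Suc y mod l = x" using h by simp
            moreover have "y < l" using that by simp
            ultimately have "y \<in> A \<longleftrightarrow> x \<in> A" using cl[rule_format, of y] that(4,5) by simp
            then show ?thesis by simp
          qed
        qed
        show ?thesis
        proof (cases "a < bb")
          case True then show ?thesis using gen[OF tri True ab(3)] ab pqP by simp
        next
          case False then have "bb < a" using abne by simp
          have tri': "Tri bb a" using Tri_sym tri by blast
          show ?thesis using gen[OF tri' \<open>bb < a\<close> ab(1)] ab pqP by auto
        qed
      qed
      have wsq: "w {s, q} = (if bb \<in> A then (-1) ^ card {u \<in> {s, q}. u < s} else 0)"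
      proof -
        have e: "{s, q} - {s} = {q}" using ps by auto
        have "(\<exists>k\<in>A. {q} = {js ! k}) \<longleftrightarrow> bb \<in> A"
        proof
          assume "\<exists>k\<in>A. {q} = {js ! k}"
          then obtain k where "k \<in> A" "q = js ! k" by auto
          then have "k = bb" using js_inj ab A by auto
          then show "bb \<in> A" using \<open>k \<in> A\<close> by simp
        qed (use ab in auto)
        then show ?thesis by (simp add: w_def e)
      qed
      have wsp: "w {s, p} = (if a \<in> A then (-1) ^ card {u \<in> {s, p}. u < s} else 0)"
      proof -
        have e: "{s, p} - {s} = {p}" using ps by auto
        have "(\<exists>k\<in>A. {p} = {js ! k}) \<longleftrightarrow> a \<in> A"
        proof
          assume "\<exists>k\<in>A. {p} = {js ! k}"
          then obtain k where "k \<in> A" "p = js ! k" by auto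
          then have "k = a" using js_inj ab A by auto
          then show "a \<in> A" using \<open>k \<in> A\<close> by simp
        qed (use ab in auto)
        then show ?thesis by (simp add: w_def e)
      qed
      have wpq: "w {p, q} = 0" using ps by (simp add: w_def)
      have d1: "{s, p, q} - {s} = {p, q}" "{s, p, q} - {p} = {s, q}" "{s, p, q} - {q} = {s, p}"
        using ps pq by auto
      have "cob w \<tau> = (-1) ^ card {u \<in> {p, q}. u < s} * w {p, q}
          + ((-1) ^ card {u \<in> {s, q}. u < p} * w {s, q} + (-1) ^ card {u \<in> {s, p}. u < q} * w {s, p})"
      proof -
        define f where "f x = (-1::complex) ^ card {u \<in> {s, p, q} - {x}. u < x} * w ({s, p, q} - {x})" for x
        have "cob w \<tau> = (\<Sum>x\<in>{s, p, q}. f x)" unfolding cob_def tau f_def ..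
        also have "\<dots> = f s + (f p + f q)" using ps pq by simp
        finally show ?thesis by (simp only: f_def d1)
      qed
      also have "\<dots> = 0"
      proof (cases "a \<in> A")
        case True
        then have "bb \<in> A" using eqA by simp
        then show ?thesis using True wpq wsq wsp sign3[of s p q] ps pq by (simp add: mult.assoc)
      next
        case False
        then have "bb \<notin> A" using eqA by simp
        then show ?thesis using False wpq wsq wsp by simp
      qed
      finally show ?thesis .
    qed
  qed
qed

end


theorem lemma4p3:
  fixes v :: "'n::{finite,linorder} \<Rightarrow> real^3" and F :: "'n set set"
    and g :: "real^3 \<Rightarrow> real" and s :: 'n
  assumes "\<forall>i k. v i $ k \<in> \<int>"
    and "complete_simplicial_fan v F"
    and "sigma_pl v F g"
    and "pic_vec v g \<notin> M_image v"
    and "\<forall>I\<in>Delta v F. pic_vec v g \<notin> interior (Zpic v I)"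
    and "g (v s) = 0"
    and "\<forall>i. i \<noteq> s \<longrightarrow> g (v i) \<noteq> 0"
  shows "\<forall>js. cyclic_order_around v F s js \<longrightarrow> sign_changes g v js = 2"
proof (intro allI impI)
  fix js assume co: "cyclic_order_around v F s js"
  then obtain e1 e2 where e: "e1 \<bullet> e1 = 1" "e2 \<bullet> e2 = 1" "e1 \<bullet> e2 = 0" "e1 \<bullet> v s = 0" "e2 \<bullet> v s = 0"
      "sorted_wrt (>) (map (\<lambda>j. Arg (Complex (v j \<bullet> e1) (v j \<bullet> e2))) js)"
    and dj: "distinct js" "set js = nbrs F s"
    unfolding cyclic_order_around_def by blast
  interpret st: star v F s js e1 e2
    by unfold_locales (use assms(2) e dj in auto)
  define P where "P = {i. g (v i) > 0}"
  have sP: "s \<notin> P" using assms(6) by (simp add: P_def)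
  have vs: "v s \<noteq> 0" by (rule fan_v_nonzero[OF assms(2)])
  note int = interior_two[OF vs assms(6,7)]
  have nD1: "P \<notin> Delta v F" using assms(5) int(1) unfolding P_def by blast
  have nD2: "insert s P \<notin> Delta v F" using assms(5) int(2) unfolding P_def by blast
  have nh1: "\<And>d. \<not> red_hom_nonzero {J. J \<subseteq> P \<and> J \<in> F} d"
    using nD1 cplx_eq[OF assms(2)] by (simp add: Delta_def)
  have nh2: "\<And>d. \<not> red_hom_nonzero {J. J \<subseteq> insert s P \<and> J \<in> F} d"
    using nD2 cplx_eq[OF assms(2)] by (simp add: Delta_def)
  define pos where "pos k \<longleftrightarrow> js ! k \<in> P" for k
  have lp: "0 < length js" by (rule st.l_pos)
  have pos_iff: "(0 \<le> g (v (js ! k))) = pos k" if "k < length js" for k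
  proof -
    have "js ! k \<noteq> s" using st.js_ne_s that by blast
    then have "g (v (js ! k)) \<noteq> 0" using assms(7) by blast
    then show ?thesis by (auto simp: pos_def P_def)
  qed
  have sc: "sign_changes g v js = card {k. k < length js \<and> pos k \<noteq> pos ((k + 1) mod length js)}"
  proof -
    have "{k. k < length js \<and> (0 \<le> g (v (js ! k))) \<noteq> (0 \<le> g (v (js ! ((k + 1) mod length js))))}
        = {k. k < length js \<and> pos k \<noteq> pos ((k + 1) mod length js)}"
      using pos_iff lp by auto
    then show ?thesis unfolding sign_changes_def by simp
  qed
  consider "\<forall>k<length js. \<not> pos k" | "\<forall>k<length js. pos k"
    | "\<exists>k<length js. \<not> pos k" "\<exists>k<length js. pos k" by blast
  then show "sign_changes g v js = 2"
  proof cases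
    case 1
    have noedge: "\<forall>x\<in>P. {s, x} \<notin> F"
    proof (intro ballI notI)
      fix x assume x: "x \<in> P" "{s, x} \<in> F"
      then have "x \<noteq> s" using sP by auto
      then have "x \<in> nbrs F s" using x by (simp add: nbrs_def)
      then obtain k where "k < length js" "js ! k = x" using st.nbr_js by blast
      then show False using 1 x by (auto simp: pos_def)
    qed
    show ?thesis
    proof (cases "P = {}")
      case True
      have "red_hom_nonzero {J. J \<subseteq> {} \<and> J \<in> F} 0" by (rule caseA_empty[OF csf_parts(1)[OF assms(2)]])
      then show ?thesis using nh1[of 0] True by simp
    next
      case False
      then obtain p where "p \<in> P" by blast
      have "red_hom_nonzero {J. J \<subseteq> insert s P \<and> J \<in> F} (Suc 0)"
        by (rule caseA[OF _ sP \<open>p \<in> P\<close> noedge]) (use csf_parts(3)[OF assms(2)] in blast)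
      then show ?thesis using nh2 by blast
    qed
  next
    case 2
    have "red_hom_nonzero {J. J \<subseteq> insert s P \<and> J \<in> F} 3"
      by (rule st.caseB[OF _ sP nh1]) (use 2 in \<open>auto simp: pos_def\<close>)
    then show ?thesis using nh2 by blast
  next
    case 3
    have "card {k. k < length js \<and> pos k \<noteq> pos ((k + 1) mod length js)} = 2"
    proof (rule comb_two[OF lp 3])
      fix A assume A: "A \<subseteq> {k. k < length js \<and> pos k}"
        and cl: "\<forall>k<length js. pos k \<and> pos ((k + 1) mod length js) \<longrightarrow> (k \<in> A \<longleftrightarrow> (k + 1) mod length js \<in> A)"
        and ne: "A \<noteq> {}"
      show "{k. k < length js \<and> pos k} \<subseteq> A"
      proof (rule ccontr)
        assume "\<not> {k. k < length js \<and> pos k} \<subseteq> A"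
        then obtain a2 where a2: "a2 < length js" "pos a2" "a2 \<notin> A" by blast
        obtain a1 where a1: "a1 \<in> A" using ne by blast
        have "red_hom_nonzero {J. J \<subseteq> insert s P \<and> J \<in> F} 2"
        proof (rule st.caseC[OF sP _ _ a1 a2(1) _ a2(3) nh1])
          show "A \<subseteq> {k. k < length js \<and> js ! k \<in> P}" using A by (auto simp: pos_def)
          show "\<forall>k<length js. js ! k \<in> P \<and> js ! (Suc k mod length js) \<in> P \<longrightarrow> (k \<in> A \<longleftrightarrow> Suc k mod length js \<in> A)"
            using cl by (simp add: pos_def)
          show "js ! a2 \<in> P" using a2 by (simp add: pos_def)
        qed
        then show False using nh2 by blast
      qed
    qed
    then show ?thesis using sc by simp
  qed
qed



end
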